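(* Let $S$ be an off-rational subgroup of $\mathbb R^2$ and $\xi$ an off-rational subgroup of $\mathbb R$ such that $\tau(S)\supset\xi$. Then there is a nested sequence $\Gamma=(\Gamma_j)_{j\ge1}$ of lattices $\Gamma_1\supset\Gamma_2\supset\cdots$ in $H_3(\mathbb R)$ such that $S_\Gamma=S$ and $\xi_\Gamma=\xi$. If $S$ is dense in $\mathbb R^2$ then $\bigcap_j p(\Gamma_j)=\{0\}$. If, in addition, $\xi$ is dense in $\mathbb R$, then $\bigcap_j\Gamma_j=\{1\}$.
   Context: $H_3(\mathbb R)$: real $3\times3$ upper triangular unipotent matrices; $c(t)$ has $(1,3)$ entry $t$, other off-diagonal entries $0$; for $g$ with $(1,2)$ entry $t_1$ and $(2,3)$ entry $t_2$, $p(g)=(t_1,t_2)$. A lattice is a discrete subgroup of finite covolume. For a lattice $\Lambda$: $\Lambda\cap\{c(t)\}=\{c(m\xi_\Lambda):m\in\mathbb Z\}$, $\xi_\Lambda>0$; $p(\Lambda)=A\mathbb Z^2$, $A\in GL_2(\mathbb R)$, and $p(\Lambda)^*:=(A^* )^{-1}\mathbb Z^2$. $S_\Gamma:=\bigcup_j p(\Gamma_j)^*$, $\xi_\Gamma:=\bigcup_j\xi_{\Gamma_j}^{-1}\mathbb Z$. Off-rational: a subgroup $S\subset\mathbb R^m$ whose closure is cocompact and $S=AQ$ with $A\in GL_m(\mathbb R)$ and $Q\subset\mathbb Q^m$ a subgroup. Writing $Q=\bigcup_jA_j^{-1}\mathbb Z^m$ with $A_j\in GL_m(\mathbb R)\cap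 M_m(\mathbb Z)$ and $A_1^{-1}\mathbb Z^m\subset A_2^{-1}\mathbb Z^m\subset\cdots$, set $\tau(S):=\bigcup_j\frac{\det A}{\det A_j}\mathbb Z$ (independent of choices). *)

theory Defs
  imports "HOL-Analysis.Analysis"
begin

text \<open>An element of H_3(R), the upper triangular unipotent 3x3 matrix with
(1,2) entry a, (2,3) entry b and (1,3) entry c, is represented by its
coordinates (a, b, c). The group law below is matrix multiplication in these
coordinates; the topology is that of R^3 and Haar measure is Lebesgue measure.\<close>

type_synonym heis = "real \<times> real \<times> real"

definition heis_mult :: "heis \<Rightarrow> heis \<Rightarrow> heis" where
  "heis_mult g h = (case g of (a, b, c) \<Rightarrow> case h of (a', b', c') \<Rightarrow>
      (a + a', b + b', c + c' + a * b'))"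

definition heis_one :: heis where
  "heis_one = (0, 0, 0)"

definition heis_inv :: "heis \<Rightarrow> heis" where
  "heis_inv g = (case g of (a, b, c) \<Rightarrow> (- a, - b, a * b - c))"

definition heis_c :: "real \<Rightarrow> heis" where
  "heis_c t = (0, 0, t)"

definition heis_p :: "heis \<Rightarrow> real^2" where
  "heis_p g = (case g of (a, b, c) \<Rightarrow> vector [a, b])"

definition heis_subgroup :: "heis set \<Rightarrow> bool" where
  "heis_subgroup G \<longleftrightarrow> heis_one \<in> G \<and> (\<forall>g\<in>G. \<forall>h\<in>G. heis_mult g h \<in> G)
      \<and> (\<forall>g\<in>G. heis_inv g \<in> G)"

definition heis_discrete :: "heis set \<Rightarrow> bool" where
  "heis_discrete G \<longleftrightarrow> (\<forall>g\<in>G. \<exists>e>0. \<forall>h\<in>G. dist h g < e \<longrightarrow> h = g)"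

text \<open>Finite covolume: there is a Borel (strict) fundamental domain for the
action of G on H_3(R) by left translation, of finite Haar (= Lebesgue) measure.\<close>

definition heis_finite_covolume :: "heis set \<Rightarrow> bool" where
  "heis_finite_covolume G \<longleftrightarrow> (\<exists>F. F \<in> sets lborel \<and> emeasure lborel F < \<infinity> \<and>
      (\<forall>g. \<exists>!\<gamma>. \<gamma> \<in> G \<and> heis_mult (heis_inv \<gamma>) g \<in> F))"

definition heis_lattice :: "heis set \<Rightarrow> bool" where
  "heis_lattice G \<longleftrightarrow> heis_subgroup G \<and> heis_discrete G \<and> heis_finite_covolume G"

definition int_vecs :: "(real^'n) set" where
  "int_vecs = {v. \<forall>i. v $ i \<in> \<int>}"

definition xi_lat :: "heis set \<Rightarrow> real" where
  "xi_lat L = (THE \<xi>. \<xi> > 0 \<and> L \<inter> range heis_c = {heis_c (of_int m * \<xi>) | m. True})"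

definition dual_lat :: "(real^'n) set \<Rightarrow> (real^'n) set" where
  "dual_lat L = (let A = (SOME A :: real^'n^'n. invertible A \<and> L = (\<lambda>z. A *v z) ` int_vecs)
     in (\<lambda>z. matrix_inv (transpose A) *v z) ` int_vecs)"

definition S_Gamma :: "(nat \<Rightarrow> heis set) \<Rightarrow> (real^2) set" where
  "S_Gamma \<Gamma> = (\<Union>j. dual_lat (heis_p ` \<Gamma> j))"

definition xi_Gamma :: "(nat \<Rightarrow> heis set) \<Rightarrow> real set" where
  "xi_Gamma \<Gamma> = (\<Union>j. {of_int m / xi_lat (\<Gamma> j) | m. True})"

definition rat_vecs :: "(real^'n) set" where
  "rat_vecs = {v. \<forall>i. v $ i \<in> \<rat>}"

definition add_subgroup :: "'a::ab_group_add set \<Rightarrow> bool" where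
  "add_subgroup Q \<longleftrightarrow> 0 \<in> Q \<and> (\<forall>x\<in>Q. \<forall>y\<in>Q. x + y \<in> Q) \<and> (\<forall>x\<in>Q. - x \<in> Q)"

definition cocompact :: "(real^'n) set \<Rightarrow> bool" where
  "cocompact T \<longleftrightarrow> (\<exists>K. compact K \<and> (\<forall>v. \<exists>t\<in>T. \<exists>k\<in>K. v = t + k))"

definition off_rational :: "(real^'n) set \<Rightarrow> bool" where
  "off_rational S \<longleftrightarrow> add_subgroup S \<and> cocompact (closure S) \<and>
     (\<exists>(A::real^'n^'n) Q. invertible A \<and> add_subgroup Q \<and> Q \<subseteq> rat_vecs \<and> S = (\<lambda>q. A *v q) ` Q)"

text \<open>T is tau(S) computed from one admissible choice of data (A, Q, (A_j)).\<close>

definition is_tau :: "(real^'n) set \<Rightarrow> real set \<Rightarrow> bool" where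
  "is_tau S T \<longleftrightarrow> (\<exists>(A::real^'n^'n) Q (As :: nat \<Rightarrow> real^'n^'n).
     invertible A \<and> add_subgroup Q \<and> Q \<subseteq> rat_vecs \<and> S = (\<lambda>q. A *v q) ` Q \<and>
     (\<forall>j. invertible (As j) \<and> (\<forall>i k. As j $ i $ k \<in> \<int>)) \<and>
     (\<forall>j. (\<lambda>z. matrix_inv (As j) *v z) ` int_vecs \<subseteq> (\<lambda>z. matrix_inv (As (Suc j)) *v z) ` int_vecs) \<and>
     Q = (\<Union>j. (\<lambda>z. matrix_inv (As j) *v z) ` int_vecs) \<and>
     T = (\<Union>j. {of_int m * (det A / det (As j)) | m. True}))"

definition tau :: "(real^'n) set \<Rightarrow> real set" where
  "tau S = (SOME T. is_tau S T)"

end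

theory Submission
  imports Defs
begin


definition zm :: "real \<Rightarrow> real \<Rightarrow> bool" where
  "zm \<eta> z \<longleftrightarrow> (\<exists>k::int. z = of_int k * \<eta>)"

lemma zm_add: "zm e a \<Longrightarrow> zm e b \<Longrightarrow> zm e (a + b)"
  unfolding zm_def by (metis distrib_right of_int_add)
lemma zm_minus: "zm e a \<Longrightarrow> zm e (- a)"
  unfolding zm_def by (metis mult_minus_left of_int_minus)
lemma zm_diff: "zm e a \<Longrightarrow> zm e b \<Longrightarrow> zm e (a - b)"
  using zm_add zm_minus by (metis diff_conv_add_uminus)
lemma zm_0: "zm e 0" unfolding zm_def by (metis mult_zero_left of_int_0)
lemma zm_mult_int: "zm e a \<Longrightarrow> zm e (of_int k * a)"
  unfolding zm_def by (metis mult.assoc of_int_mult)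
lemma zm_Ints: "zm e a \<Longrightarrow> x \<in> \<int> \<Longrightarrow> zm e (x * a)"
  by (metis Ints_cases zm_mult_int)
lemma zm_Ints': "zm e a \<Longrightarrow> x \<in> \<int> \<Longrightarrow> zm e (a * x)"
  by (metis zm_Ints mult.commute)
lemma zm_trans: "zm e a \<Longrightarrow> zm a b \<Longrightarrow> zm e b"
  unfolding zm_def by (metis mult.assoc mult.commute of_int_mult)

definition psi :: "real^2^2 \<Rightarrow> real \<Rightarrow> real \<Rightarrow> real \<Rightarrow> real \<Rightarrow> real" where
  "psi B u v n1 n2 = B$1$1*B$2$1*n1^2/2 + B$1$1*B$2$2*n1*n2 + B$1$2*B$2$2*n2^2/2 + u*n1 + v * n2"

definition Gam :: "real^2^2 \<Rightarrow> real \<Rightarrow> real \<Rightarrow> real \<Rightarrow> heis set" where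
  "Gam B \<eta> u v = {(x1,x2,z). \<exists>(n1::int) (n2::int). x1 = B$1$1 * of_int n1 + B$1$2 * of_int n2 \<and> x2 = B$2$1 * of_int n1 + B$2$2 * of_int n2
      \<and> zm \<eta> (z - psi B u v (of_int n1) (of_int n2))}"

lemma psi_cocycle:
  "psi B u v n1 n2 + psi B u v p1 p2 + (B$1$1*n1 + B$1$2*n2)*(B$2$1*p1 + B$2$2*p2)
     - psi B u v (n1+p1) (n2+p2) = - det B * p1 * n2"
  by (simp add: psi_def det_2 algebra_simps power2_eq_square field_simps)

lemma psi_inv:
  "(B$1$1*n1 + B$1$2*n2)*(B$2$1*n1 + B$2$2*n2) - psi B u v n1 n2 - psi B u v (-n1) (-n2) = - det B * n1 * n2"
  by (simp add: psi_def det_2 algebra_simps power2_eq_square field_simps)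

lemma GamE:
  assumes "g \<in> Gam B \<eta> u v"
  obtains n1 n2 :: int and z where "g = (B$1$1*n1 + B$1$2*n2, B$2$1*n1 + B$2$2*n2, z)"
    "zm \<eta> (z - psi B u v n1 n2)"
  using assms unfolding Gam_def by auto

lemma GamI:
  "zm \<eta> (z - psi B u v (of_int n1) (of_int n2)) \<Longrightarrow>
   (B$1$1* of_int n1 + B$1$2* of_int n2, B$2$1* of_int n1 + B$2$2* of_int n2, z) \<in> Gam B \<eta> u v"
  unfolding Gam_def by auto

lemma Gam_subgroup:
  assumes "zm \<eta> (det B)"
  shows "heis_subgroup (Gam B \<eta> u v)"
  unfolding heis_subgroup_def
proof (intro conjI ballI)
  show "heis_one \<in> Gam B \<eta> u v"
    using GamI[of \<eta> 0 B u v 0 0] unfolding heis_one_def by (simp add: psi_def zm_0)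
next
  fix g h assume g: "g \<in> Gam B \<eta> u v" and h: "h \<in> Gam B \<eta> u v"
  obtain n1 n2 :: int and z where gg: "g = (B$1$1*n1 + B$1$2*n2, B$2$1*n1 + B$2$2*n2, z)"
    "zm \<eta> (z - psi B u v n1 n2)" using g by (rule GamE)
  obtain p1 p2 :: int and w where hh: "h = (B$1$1*p1 + B$1$2*p2, B$2$1*p1 + B$2$2*p2, w)"
    "zm \<eta> (w - psi B u v p1 p2)" using h by (rule GamE)
  have "zm \<eta> ((z - psi B u v n1 n2) + (w - psi B u v p1 p2) + (of_int (- p1 * n2) * det B))"
    using gg(2) hh(2) zm_add zm_mult_int assms by blast
  moreover have "(z - psi B u v n1 n2) + (w - psi B u v p1 p2) + (of_int (- p1 * n2) * det B)
     = (z + w + (B$1$1*n1 + B$1$2*n2) * (B$2$1*p1 + B$2$2*p2)) - psi B u v (of_int (n1+p1)) (of_int (n2+p2))"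
    using psi_cocycle[of B u v n1 n2 p1 p2] by (simp add: algebra_simps)
  ultimately have "(B$1$1* of_int (n1+p1) + B$1$2* of_int (n2+p2), B$2$1* of_int (n1+p1) + B$2$2* of_int (n2+p2),
      z + w + (B$1$1*n1 + B$1$2*n2) * (B$2$1*p1 + B$2$2*p2)) \<in> Gam B \<eta> u v"
    by (intro GamI) (simp only:)
  then show "heis_mult g h \<in> Gam B \<eta> u v"
    using gg hh unfolding heis_mult_def by (simp add: algebra_simps)
next
  fix g assume g: "g \<in> Gam B \<eta> u v"
  obtain n1 n2 :: int and z where gg: "g = (B$1$1*n1 + B$1$2*n2, B$2$1*n1 + B$2$2*n2, z)"
    "zm \<eta> (z - psi B u v n1 n2)" using g by (rule GamE)
  have "zm \<eta> (- (z - psi B u v n1 n2) + (of_int (- n1 * n2) * det B))"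
    using gg(2) zm_add zm_mult_int assms zm_minus by blast
  moreover have "- (z - psi B u v n1 n2) + (of_int (- n1 * n2) * det B) =
     (B$1$1*n1 + B$1$2*n2)*(B$2$1*n1 + B$2$2*n2) - z - psi B u v (of_int (-n1)) (of_int (-n2))"
    using psi_inv[of B n1 n2 u v] by (simp add: algebra_simps)
  ultimately have "(B$1$1* of_int (-n1) + B$1$2* of_int (-n2), B$2$1* of_int (-n1) + B$2$2* of_int (-n2),
      (B$1$1*n1 + B$1$2*n2)*(B$2$1*n1 + B$2$2*n2) - z) \<in> Gam B \<eta> u v"
    by (intro GamI) (simp only:)
  then show "heis_inv g \<in> Gam B \<eta> u v"
    using gg unfolding heis_inv_def by (simp add: algebra_simps)
qed




lemma int_close: "\<bar>of_int a - of_int b\<bar> < (1::real) \<Longrightarrow> a = b"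
proof -
  assume "\<bar>of_int a - of_int b\<bar> < (1::real)"
  then have "real_of_int \<bar>a - b\<bar> < 1" by simp
  then have "\<bar>a - b\<bar> < 1" by linarith
  then show "a = b" by simp
qed

lemma zm_small: "zm \<eta> t \<Longrightarrow> \<bar>t\<bar> < \<eta> \<Longrightarrow> t = 0"
proof -
  assume "zm \<eta> t" "\<bar>t\<bar> < \<eta>"
  then obtain k::int where k: "t = k * \<eta>" unfolding zm_def by auto
  have "\<eta> > 0" using \<open>\<bar>t\<bar> < \<eta>\<close> by linarith
  have "\<bar>of_int k\<bar> * \<eta> < 1 * \<eta>" using k \<open>\<bar>t\<bar> < \<eta>\<close> \<open>\<eta> > 0\<close> by (simp add: abs_mult)
  then have "\<bar>of_int k\<bar> < (1::real)" by (rule mult_right_less_imp_less) (use \<open>\<eta> > 0\<close> in auto)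
  then have "k = 0" by (metis int_close of_int_0 diff_zero)
  then show "t = 0" using k by simp
qed

lemma solve1: fixes B :: "real^2^2" shows "x1 = B$1$1*n1 + B$1$2*n2 \<Longrightarrow> x2 = B$2$1*n1 + B$2$2*n2 \<Longrightarrow>
   det B * n1 = B$2$2*x1 - B$1$2*x2 \<and> det B * n2 = B$1$1*x2 - B$2$1*x1"
  by (simp add: det_2 algebra_simps)

lemma dist_parts:
  fixes g h :: heis
  shows "\<bar>fst h - fst g\<bar> \<le> dist h g" "\<bar>fst (snd h) - fst (snd g)\<bar> \<le> dist h g"
    "\<bar>snd (snd h) - snd (snd g)\<bar> \<le> dist h g"
  using dist_fst_le[of h g] dist_snd_le[of h g] dist_fst_le[of "snd h" "snd g"] dist_snd_le[of "snd h" "snd g"]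
  by (auto simp: dist_real_def)

lemma coord_close:
  fixes d a b e y x y' x' :: real
  assumes "d * p = a * y - b * y'" "d * n = a * x - b * x'"
    "\<bar>y - x\<bar> < e" "\<bar>y' - x'\<bar> < e" "e \<le> \<bar>d\<bar> / (1 + \<bar>a\<bar> + \<bar>b\<bar>)" "d \<noteq> 0"
  shows "\<bar>p - n\<bar> < 1"
proof -
  have "d * (p - n) = a * (y - x) - b * (y' - x')"
    using assms(1,2) by (simp add: algebra_simps)
  then have "\<bar>d\<bar> * \<bar>p - n\<bar> = \<bar>a * (y - x) - b * (y' - x')\<bar>"
    by (metis abs_mult)
  also have "\<dots> \<le> \<bar>a\<bar> * \<bar>y - x\<bar> + \<bar>b\<bar> * \<bar>y' - x'\<bar>" by (metis abs_mult abs_triangle_ineq4)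
  also have "\<dots> \<le> \<bar>a\<bar> * e + \<bar>b\<bar> * e" using assms(3,4)
    by (intro add_mono mult_left_mono) auto
  also have "\<dots> = (\<bar>a\<bar> + \<bar>b\<bar>) * e" by algebra
  also have "\<dots> \<le> (\<bar>a\<bar> + \<bar>b\<bar>) * (\<bar>d\<bar> / (1 + \<bar>a\<bar> + \<bar>b\<bar>))"
    using assms(5) by (intro mult_left_mono) auto
  also have "\<dots> < \<bar>d\<bar>" using assms(6)
    by (simp add: field_simps)
  finally have "\<bar>d\<bar> * \<bar>p - n\<bar> < \<bar>d\<bar> * 1" by simp
  then show ?thesis using assms(6) by (simp only: mult_less_cancel_left)
qed

lemma Gam_discrete:
  assumes "det B \<noteq> 0" "\<eta> > 0"
  shows "heis_discrete (Gam B \<eta> u v)"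
  unfolding heis_discrete_def
proof
  fix g assume g: "g \<in> Gam B \<eta> u v"
  obtain n1 n2 :: int and z where gg: "g = (B$1$1*n1 + B$1$2*n2, B$2$1*n1 + B$2$2*n2, z)"
    "zm \<eta> (z - psi B u v n1 n2)" using g by (rule GamE)
  define e where "e = min \<eta> (min (\<bar>det B\<bar> / (1 + \<bar>B$2$2\<bar> + \<bar>B$1$2\<bar>)) (\<bar>det B\<bar> / (1 + \<bar>B$1$1\<bar> + \<bar>B$2$1\<bar>)))"
  have e0: "e > 0" using assms unfolding e_def by (simp add: add_pos_nonneg)
  show "\<exists>e>0. \<forall>h\<in>Gam B \<eta> u v. dist h g < e \<longrightarrow> h = g"
  proof (intro exI[of _ e] conjI ballI impI e0)
    fix h assume h: "h \<in> Gam B \<eta> u v" and dh: "dist h g < e"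
    obtain p1 p2 :: int and w where hh: "h = (B$1$1*p1 + B$1$2*p2, B$2$1*p1 + B$2$2*p2, w)"
      "zm \<eta> (w - psi B u v p1 p2)" using h by (rule GamE)
    let ?x1 = "B$1$1*n1 + B$1$2*n2" and ?x2 = "B$2$1*n1 + B$2$2*n2"
    let ?y1 = "B$1$1*p1 + B$1$2*p2" and ?y2 = "B$2$1*p1 + B$2$2*p2"
    have c1: "\<bar>?y1 - ?x1\<bar> < e" "\<bar>?y2 - ?x2\<bar> < e" "\<bar>w - z\<bar> < e"
      using dist_parts[of h g] dh gg hh by auto
    have s1: "det B * p1 = B$2$2*?y1 - B$1$2*?y2" "det B * p2 = B$1$1*?y2 - B$2$1*?y1"
      using solve1 by blast+
    have s2: "det B * n1 = B$2$2*?x1 - B$1$2*?x2" "det B * n2 = B$1$1*?x2 - B$2$1*?x1"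
      using solve1 by blast+
    have "\<bar>of_int p1 - of_int n1\<bar> < (1::real)"
      by (rule coord_close[OF s1(1) s2(1) c1(1) c1(2)]) (use assms in \<open>auto simp: e_def min_le_iff_disj\<close>)
    then have p1: "p1 = n1" by (rule int_close)
    have "\<bar>of_int p2 - of_int n2\<bar> < (1::real)"
      by (rule coord_close[OF s1(2) s2(2) c1(2) c1(1)]) (use assms in \<open>auto simp: e_def min_le_iff_disj\<close>)
    then have p2: "p2 = n2" by (rule int_close)
    have "zm \<eta> ((w - psi B u v p1 p2) - (z - psi B u v n1 n2))" using hh(2) gg(2) by (rule zm_diff)
    moreover have "\<bar>(w - psi B u v p1 p2) - (z - psi B u v n1 n2)\<bar> < \<eta>"
      using c1(3) p1 p2 e_def by simp
    ultimately have "w = z" using zm_small p1 p2 by fastforce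
    then show "h = g" using gg hh p1 p2 by simp
  qed
qed



lemma zmE: "zm \<eta> t \<Longrightarrow> (\<And>k::int. t = of_int k * \<eta> \<Longrightarrow> P) \<Longrightarrow> P"
  unfolding zm_def by auto

definition latt :: "real^'n^'n \<Rightarrow> (real^'n) set" where
  "latt B = (\<lambda>z. B *v z) ` int_vecs"

lemma mv2: "(B *v x) $ 1 = B$1$1 * x$1 + B$1$2 * x$2" "(B *v x) $ 2 = B$2$1 * x$1 + B$2$2 * x$2"
  for B :: "real^2^2"
  by (simp_all add: matrix_vector_mult_def sum_2)

lemma mm2: "(A ** B) $ i $ j = A$i$1 * B$1$j + A$i$2 * B$2$j" for A B :: "real^2^2"
  by (simp add: matrix_matrix_mult_def sum_2)

lemma int_vecs2: "(v::real^2) \<in> int_vecs \<longleftrightarrow> v$1 \<in> \<int> \<and> v$2 \<in> \<int>"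
  unfolding int_vecs_def by (simp add: forall_2)

lemma vec2_eq: "(v::real^2) = w \<longleftrightarrow> v$1 = w$1 \<and> v$2 = w$2"
  by (simp add: vec_eq_iff forall_2)

lemma heis_p_simp: "heis_p (a, b, c) = vector [a, b]" unfolding heis_p_def by simp

lemma Gam_p: "heis_p ` Gam B \<eta> u v = latt B"
proof
  show "heis_p ` Gam B \<eta> u v \<subseteq> latt B"
  proof
    fix y assume "y \<in> heis_p ` Gam B \<eta> u v"
    then obtain g where g: "g \<in> Gam B \<eta> u v" "y = heis_p g" by auto
    obtain n1 n2 :: int and z where gg: "g = (B$1$1*n1 + B$1$2*n2, B$2$1*n1 + B$2$2*n2, z)"
      using g(1) by (rule GamE)
    have "vector [of_int n1, of_int n2] \<in> (int_vecs :: (real^2) set)" unfolding int_vecs2 by simp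
    moreover have "y = B *v vector [of_int n1, of_int n2]"
      unfolding g(2) gg heis_p_simp vec2_eq mv2 by simp
    ultimately show "y \<in> latt B" unfolding latt_def by blast
  qed
next
  show "latt B \<subseteq> heis_p ` Gam B \<eta> u v"
  proof
    fix y assume "y \<in> latt B"
    then obtain x where x: "x \<in> int_vecs" "y = B *v x" unfolding latt_def by auto
    obtain n1 where n1: "x$1 = of_int n1" using x(1) unfolding int_vecs2 by (auto elim: Ints_cases)
    obtain n2 where n2: "x$2 = of_int n2" using x(1) unfolding int_vecs2 by (auto elim: Ints_cases)
    have "(B$1$1 * of_int n1 + B$1$2 * of_int n2, B$2$1 * of_int n1 + B$2$2 * of_int n2,
        psi B u v (of_int n1) (of_int n2)) \<in> Gam B \<eta> u v"
      by (rule GamI) (simp add: zm_0)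
    moreover have "y = heis_p (B$1$1 * of_int n1 + B$1$2 * of_int n2, B$2$1 * of_int n1 + B$2$2 * of_int n2,
        psi B u v (of_int n1) (of_int n2))"
      unfolding x(2) heis_p_simp vec2_eq mv2 n1 n2 by simp
    ultimately show "y \<in> heis_p ` Gam B \<eta> u v" by blast
  qed
qed

lemma Gam_center:
  assumes "det B \<noteq> 0"
  shows "Gam B \<eta> u v \<inter> range heis_c = {heis_c (of_int m * \<eta>) | m. True}"
proof (intro equalityI subsetI)
  fix g assume "g \<in> Gam B \<eta> u v \<inter> range heis_c"
  then obtain t where t: "g = heis_c t" "g \<in> Gam B \<eta> u v" by auto
  obtain n1 n2 :: int and z where gg: "g = (B$1$1*n1 + B$1$2*n2, B$2$1*n1 + B$2$2*n2, z)"
    "zm \<eta> (z - psi B u v n1 n2)" using t(2) by (rule GamE)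
  have e: "B$1$1*n1 + B$1$2*n2 = 0" "B$2$1*n1 + B$2$2*n2 = 0" "z = t" using t(1) gg(1) by (auto simp: heis_c_def)
  have "det B * n1 = B$2$2*(B$1$1*n1 + B$1$2*n2) - B$1$2*(B$2$1*n1 + B$2$2*n2)"
    "det B * n2 = B$1$1*(B$2$1*n1 + B$2$2*n2) - B$2$1*(B$1$1*n1 + B$1$2*n2)"
    by (simp_all add: det_2 algebra_simps)
  then have "det B * n1 = 0" "det B * n2 = 0" unfolding e(1,2) by simp_all
  then have "n1 = 0" "n2 = 0" using assms by simp_all
  then have "zm \<eta> t" using gg(2) e by (simp add: psi_def)
  then show "g \<in> {heis_c (of_int m * \<eta>) | m. True}" using t(1) unfolding zm_def by auto
next
  fix g assume "g \<in> {heis_c (of_int m * \<eta>) | m. True}"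
  then obtain m where m: "g = heis_c (of_int m * \<eta>)" by auto
  have "(B$1$1 * of_int 0 + B$1$2 * of_int 0, B$2$1 * of_int 0 + B$2$2 * of_int 0, of_int m * \<eta>) \<in> Gam B \<eta> u v"
    by (rule GamI) (simp add: psi_def zm_def)
  then show "g \<in> Gam B \<eta> u v \<inter> range heis_c" using m by (simp add: heis_c_def)
qed

lemma xi_lat_eq:
  assumes "\<eta> > 0" "L \<inter> range heis_c = {heis_c (of_int m * \<eta>) | m. True}"
  shows "xi_lat L = \<eta>"
  unfolding xi_lat_def
proof (rule the_equality)
  show "\<eta> > 0 \<and> L \<inter> range heis_c = {heis_c (of_int m * \<eta>) | m. True}" using assms by simp
next
  fix x assume x: "x > 0 \<and> L \<inter> range heis_c = {heis_c (of_int m * x) | m. True}"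
  have inj: "heis_c a = heis_c b \<longleftrightarrow> a = b" for a b by (simp add: heis_c_def)
  have "heis_c (of_int 1 * x) \<in> {heis_c (of_int m * \<eta>) | m. True}" using x assms(2) by blast
  then obtain k::int where k: "x = k * \<eta>" using inj by auto
  have "heis_c (of_int 1 * \<eta>) \<in> {heis_c (of_int m * x) | m. True}" using x assms(2) by blast
  then obtain l::int where l: "\<eta> = l * x" using inj by auto
  have "k > 0" using k x assms(1) by (simp add: zero_less_mult_iff)
  have "l > 0" using l x assms(1) by (simp add: zero_less_mult_iff)
  have "\<eta> = real_of_int (l * k) * \<eta>" using k l by (simp add: mult.assoc)
  then have "real_of_int (l * k) = 1" using assms(1) by simp
  then have "l * k = 1" by linarith
  then have "k = 1" using \<open>k>0\<close> \<open>l>0\<close> by (simp add: zmult_eq_1_iff)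
  then show "x = \<eta>" using k by simp
qed

lemma half_int: "real_of_int p * (real_of_int p - 1) / 2 \<in> \<int>"
proof -
  have "even (p * (p - 1))" by simp
  then obtain q where "p * (p - 1) = 2 * q" by (meson dvdE)
  then have "real_of_int p * (real_of_int p - 1) = 2 * of_int q" by (metis of_int_1 of_int_diff of_int_mult of_int_numeral)
  then show ?thesis by simp
qed

lemma psi_compat:
  fixes B C :: "real^2^2" and u v :: real
  defines "u' \<equiv> psi B u v (C$1$1) (C$2$1) - psi (B ** C) 0 0 1 0"
    and "v' \<equiv> psi B u v (C$1$2) (C$2$2) - psi (B ** C) 0 0 0 1"
  shows "psi (B ** C) u' v' p1 p2 - psi B u v (C$1$1 * p1 + C$1$2 * p2) (C$2$1 * p1 + C$2$2 * p2)
    = det B * (- C$1$2 * C$2$1 * p1 * p2 - C$1$1 * C$2$1 * (p1 * (p1 - 1) / 2) - C$1$2 * C$2$2 * (p2 * (p2 - 1) / 2))"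
  unfolding u'_def v'_def psi_def mm2 det_2 by (simp add: power2_eq_square field_simps)

lemma Gam_nested:
  fixes B C :: "real^2^2" and u v :: real
  assumes C: "\<And>i j. C$i$j \<in> \<int>" and dB: "zm \<eta> (det B)" and ee: "zm \<eta> \<eta>'"
  defines "u' \<equiv> psi B u v (C$1$1) (C$2$1) - psi (B ** C) 0 0 1 0"
    and "v' \<equiv> psi B u v (C$1$2) (C$2$2) - psi (B ** C) 0 0 0 1"
  shows "Gam (B ** C) \<eta>' u' v' \<subseteq> Gam B \<eta> u v"
proof
  fix g assume "g \<in> Gam (B ** C) \<eta>' u' v'"
  then obtain p1 p2 :: int and z where gg: "g = ((B**C)$1$1*p1 + (B**C)$1$2*p2, (B**C)$2$1*p1 + (B**C)$2$2*p2, z)"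
    "zm \<eta>' (z - psi (B**C) u' v' p1 p2)" by (rule GamE)
  obtain c11 where c11: "C$1$1 = of_int c11" using C by (meson Ints_cases)
  obtain c12 where c12: "C$1$2 = of_int c12" using C by (meson Ints_cases)
  obtain c21 where c21: "C$2$1 = of_int c21" using C by (meson Ints_cases)
  obtain c22 where c22: "C$2$2 = of_int c22" using C by (meson Ints_cases)
  define m1 where "m1 = c11 * p1 + c12 * p2"
  define m2 where "m2 = c21 * p1 + c22 * p2"
  have "zm \<eta> (z - psi (B**C) u' v' p1 p2)" using gg(2) ee zm_trans by blast
  moreover have "zm \<eta> (psi (B ** C) u' v' p1 p2 - psi B u v (C$1$1 * p1 + C$1$2 * p2) (C$2$1 * p1 + C$2$2 * p2))"
    unfolding u'_def v'_def psi_compat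
    by (intro zm_Ints' dB Ints_diff Ints_minus Ints_mult half_int) (simp_all add: C)
  ultimately have "zm \<eta> (z - psi B u v (of_int m1) (of_int m2))"
    unfolding m1_def m2_def c11 c12 c21 c22 using zm_add by fastforce
  then have "(B$1$1 * of_int m1 + B$1$2 * of_int m2, B$2$1 * of_int m1 + B$2$2 * of_int m2, z) \<in> Gam B \<eta> u v"
    by (rule GamI)
  moreover have "g = (B$1$1 * of_int m1 + B$1$2 * of_int m2, B$2$1 * of_int m1 + B$2$2 * of_int m2, z)"
    unfolding gg(1) mm2 m1_def m2_def c11 c12 c21 c22 by (simp add: algebra_simps)
  ultimately show "g \<in> Gam B \<eta> u v" by simp
qed





lemma Gam_covol:
  assumes d: "det B \<noteq> 0" and e: "\<eta> > 0"
  shows "heis_finite_covolume (Gam B \<eta> u v)"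
proof -
  define f1 where "f1 = (\<lambda>g::heis. (B$2$2 * fst g - B$1$2 * fst (snd g)) / det B)"
  define f2 where "f2 = (\<lambda>g::heis. (B$1$1 * fst (snd g) - B$2$1 * fst g) / det B)"
  define F where "F = {g. 0 \<le> f1 g \<and> 0 \<le> f2 g \<and> 0 \<le> snd (snd g)} \<inter> {g. f1 g < 1 \<and> f2 g < 1 \<and> snd (snd g) < \<eta>}"
  have Fb: "F \<in> sets borel"
    unfolding F_def f1_def f2_def using d
    by (intro sets.Int[OF borel_closed borel_open] closed_Collect_conj closed_Collect_le open_Collect_conj open_Collect_less continuous_intros) auto
  have recon: "fst g = B$1$1 * f1 g + B$1$2 * f2 g" "fst (snd g) = B$2$1 * f1 g + B$2$2 * f2 g" for g
  proof -
    have e1: "B$1$1 * (B$2$2 * fst g - B$1$2 * fst (snd g)) + B$1$2 * (B$1$1 * fst (snd g) - B$2$1 * fst g) = det B * fst g"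
      "B$2$1 * (B$2$2 * fst g - B$1$2 * fst (snd g)) + B$2$2 * (B$1$1 * fst (snd g) - B$2$1 * fst g) = det B * fst (snd g)"
      by (simp_all add: det_2 algebra_simps)
    have "B$1$1 * f1 g + B$1$2 * f2 g = (det B * fst g) / det B"
      unfolding f1_def f2_def e1(1)[symmetric] by (simp add: add_divide_distrib)
    then show "fst g = B$1$1 * f1 g + B$1$2 * f2 g" using d by simp
    have "B$2$1 * f1 g + B$2$2 * f2 g = (det B * fst (snd g)) / det B"
      unfolding f1_def f2_def e1(2)[symmetric] by (simp add: add_divide_distrib)
    then show "fst (snd g) = B$2$1 * f1 g + B$2$2 * f2 g" using d by simp
  qed
  have bnd: "bounded F"
    unfolding bounded_iff
  proof (intro exI ballI)
    fix g assume "g \<in> F"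
    then have f: "0 \<le> f1 g" "f1 g < 1" "0 \<le> f2 g" "f2 g < 1" "0 \<le> snd (snd g)" "snd (snd g) < \<eta>"
      unfolding F_def by auto
    have a1: "\<bar>B$1$1 * f1 g\<bar> \<le> \<bar>B$1$1\<bar>" "\<bar>B$1$2 * f2 g\<bar> \<le> \<bar>B$1$2\<bar>"
      "\<bar>B$2$1 * f1 g\<bar> \<le> \<bar>B$2$1\<bar>" "\<bar>B$2$2 * f2 g\<bar> \<le> \<bar>B$2$2\<bar>"
      using f by (simp_all add: abs_mult mult_left_le)
    have "norm g \<le> norm (fst g) + norm (snd g)" by (metis norm_Pair_le prod.collapse)
    also have "norm (snd g) \<le> norm (fst (snd g)) + norm (snd (snd g))" by (metis norm_Pair_le prod.collapse)
    finally have "norm g \<le> \<bar>fst g\<bar> + \<bar>fst (snd g)\<bar> + \<bar>snd (snd g)\<bar>" by simp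
    also have "\<dots> \<le> (\<bar>B$1$1\<bar> + \<bar>B$1$2\<bar>) + (\<bar>B$2$1\<bar> + \<bar>B$2$2\<bar>) + \<eta>"
      using recon[of g] a1 f by (intro add_mono) (simp_all add: abs_triangle_ineq order_trans[OF abs_triangle_ineq])
    finally show "norm g \<le> (\<bar>B$1$1\<bar> + \<bar>B$1$2\<bar>) + (\<bar>B$2$1\<bar> + \<bar>B$2$2\<bar>) + \<eta>" .
  qed
  have key: "heis_mult (heis_inv (B$1$1*p1 + B$1$2*p2, B$2$1*p1 + B$2$2*p2, z')) g =
      (fst g - (B$1$1*p1 + B$1$2*p2), fst (snd g) - (B$2$1*p1 + B$2$2*p2),
       (B$1$1*p1 + B$1$2*p2)*(B$2$1*p1 + B$2$2*p2) - z' + snd (snd g) - (B$1$1*p1 + B$1$2*p2) * fst (snd g))"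
    for p1 p2 z' g
    by (cases g) (simp add: heis_mult_def heis_inv_def algebra_simps)
  have kf1: "f1 (a - (B$1$1*p1 + B$1$2*p2), b - (B$2$1*p1 + B$2$2*p2), c) = f1 (a,b,c) - p1"
   and kf2: "f2 (a - (B$1$1*p1 + B$1$2*p2), b - (B$2$1*p1 + B$2$2*p2), c) = f2 (a,b,c) - p2" for a b c p1 p2
    using d unfolding f1_def f2_def by (simp_all add: det_2 field_simps)
  have uniq: "\<exists>!\<gamma>. \<gamma> \<in> Gam B \<eta> u v \<and> heis_mult (heis_inv \<gamma>) g \<in> F" for g
  proof -
    obtain y1 y2 w where g: "g = (y1, y2, w)" by (cases g)
    define n1 where "n1 = \<lfloor>f1 g\<rfloor>"
    define n2 where "n2 = \<lfloor>f2 g\<rfloor>"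
    define X1 where "X1 = B$1$1 * of_int n1 + B$1$2 * of_int n2"
    define X2 where "X2 = B$2$1 * of_int n1 + B$2$2 * of_int n2"
    define c where "c = X1 * X2 + w - X1 * y2 - psi B u v n1 n2"
    define k where "k = \<lfloor>c / \<eta>\<rfloor>"
    define \<gamma>0 where "\<gamma>0 = (X1, X2, psi B u v n1 n2 + of_int k * \<eta>)"
    show ?thesis
    proof (rule ex1I[of _ \<gamma>0])
      have "zm \<eta> (psi B u v n1 n2 + of_int k * \<eta> - psi B u v n1 n2)" unfolding zm_def by auto
      then have m: "\<gamma>0 \<in> Gam B \<eta> u v" unfolding \<gamma>0_def X1_def X2_def by (rule GamI)
      have "c / \<eta> - 1 < of_int k" "of_int k \<le> c / \<eta>" unfolding k_def by linarith+
      then have "c - \<eta> < of_int k * \<eta>" "of_int k * \<eta> \<le> c" using e by (simp_all add: field_simps)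
      moreover have "of_int n1 \<le> f1 g" "f1 g < of_int n1 + 1" "of_int n2 \<le> f2 g" "f2 g < of_int n2 + 1"
        unfolding n1_def n2_def by simp_all
      moreover have hm: "heis_mult (heis_inv \<gamma>0) g = (y1 - X1, y2 - X2, c - of_int k * \<eta>)"
        unfolding \<gamma>0_def X1_def X2_def g key by (simp add: c_def X1_def X2_def algebra_simps)
      moreover have "f1 (y1 - X1, y2 - X2, c - of_int k * \<eta>) = f1 g - n1"
        "f2 (y1 - X1, y2 - X2, c - of_int k * \<eta>) = f2 g - n2"
        unfolding X1_def X2_def g by (simp_all only: kf1 kf2) (simp_all add: f1_def f2_def)
      ultimately have "heis_mult (heis_inv \<gamma>0) g \<in> F"
        unfolding F_def by simp
      with m show "\<gamma>0 \<in> Gam B \<eta> u v \<and> heis_mult (heis_inv \<gamma>0) g \<in> F" by simp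
    next
      fix \<gamma> assume a: "\<gamma> \<in> Gam B \<eta> u v \<and> heis_mult (heis_inv \<gamma>) g \<in> F"
      obtain p1 p2 :: int and z' where gg: "\<gamma> = (B$1$1*p1 + B$1$2*p2, B$2$1*p1 + B$2$2*p2, z')"
        "zm \<eta> (z' - psi B u v p1 p2)" using a by (auto elim: GamE)
      have inF: "heis_mult (heis_inv \<gamma>) g \<in> F" using a by simp
      define Y1 where "Y1 = B$1$1 * of_int p1 + B$1$2 * of_int p2"
      define Y2 where "Y2 = B$2$1 * of_int p1 + B$2$2 * of_int p2"
      have hm: "heis_mult (heis_inv \<gamma>) g = (y1 - Y1, y2 - Y2, Y1 * Y2 - z' + w - Y1 * y2)"
        unfolding gg(1) Y1_def Y2_def g key by simp
      have "f1 (y1 - Y1, y2 - Y2, Y1 * Y2 - z' + w - Y1 * y2) = f1 g - p1"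
        "f2 (y1 - Y1, y2 - Y2, Y1 * Y2 - z' + w - Y1 * y2) = f2 g - p2"
        unfolding Y1_def Y2_def g by (simp_all only: kf1 kf2) (simp_all add: f1_def f2_def)
      then have "0 \<le> f1 g - p1" "f1 g - p1 < 1" "0 \<le> f2 g - p2" "f2 g - p2 < 1"
        using inF unfolding hm F_def by auto
      then have p: "p1 = n1" "p2 = n2" unfolding n1_def n2_def
        by (metis floor_unique diff_ge_0_iff_ge diff_less_eq add.commute)+
      obtain k' :: int where k': "z' - psi B u v p1 p2 = of_int k' * \<eta>" using gg(2) by (rule zmE)
      have "Y1 * Y2 - z' + w - Y1 * y2 = c - of_int k' * \<eta>"
        using k' p unfolding c_def Y1_def Y2_def X1_def X2_def by (simp add: algebra_simps)
      then have "0 \<le> c - of_int k' * \<eta>" "c - of_int k' * \<eta> < \<eta>"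
        using inF unfolding hm F_def by auto
      then have "of_int k' \<le> c / \<eta>" "c / \<eta> < of_int k' + 1" using e by (simp_all add: field_simps)
      then have "k' = k" unfolding k_def by (metis floor_unique)
      then show "\<gamma> = \<gamma>0" unfolding gg(1) \<gamma>0_def X1_def X2_def using p k' by (simp add: algebra_simps)
    qed
  qed
  show ?thesis unfolding heis_finite_covolume_def
    using Fb bnd uniq emeasure_bounded_finite sets_lborel by blast
qed


lemma Gam_lattice:
  assumes "det B \<noteq> 0" "\<eta> > 0" "zm \<eta> (det B)"
  shows "heis_lattice (Gam B \<eta> u v)"
  unfolding heis_lattice_def using Gam_subgroup Gam_discrete Gam_covol assms by blast

lemma matrix_inv_props:
  fixes A :: "real^'n^'n"
  assumes "invertible A"
  shows "A ** matrix_inv A = mat 1" "matrix_inv A ** A = mat 1"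
  using assms unfolding invertible_def matrix_inv_def by (metis (mono_tags, lifting) someI_ex)+

lemma inv_unique:
  fixes A X :: "real^'n^'n"
  assumes "invertible A" "X ** A = mat 1"
  shows "matrix_inv A = X"
proof -
  have "X = X ** (A ** matrix_inv A)" using matrix_inv_props(1)[OF assms(1)] by (simp add: matrix_mul_rid)
  also have "\<dots> = (X ** A) ** matrix_inv A" by (simp add: matrix_mul_assoc)
  also have "\<dots> = matrix_inv A" using assms(2) by (simp add: matrix_mul_lid)
  finally show ?thesis by simp
qed

lemma invertible_inv:
  fixes A :: "real^'n^'n"
  assumes "invertible A" shows "invertible (matrix_inv A)"
  using matrix_inv_props[OF assms] unfolding invertible_def by blast

lemma int_mat_vec:
  fixes U :: "real^'n^'m"
  assumes "\<And>i j. U$i$j \<in> \<int>" "z \<in> int_vecs"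
  shows "U *v z \<in> int_vecs"
  using assms unfolding int_vecs_def matrix_vector_mult_def
  by (auto intro!: Ints_sum Ints_mult)

lemma axis_int: "(axis j 1 :: real^'n) \<in> int_vecs"
  unfolding int_vecs_def by (simp add: axis_def)

lemma mat_axis: "((U::real^'n^'m) *v axis j 1) $ i = U$i$j"
  by (simp add: matrix_vector_mult_def axis_def if_distrib cong: if_cong)

lemma latt_sub:
  fixes X Y :: "real^'n^'n"
  assumes Y: "invertible Y" and sub: "latt X \<subseteq> latt Y"
  shows "\<exists>U. (\<forall>i j. U$i$j \<in> \<int>) \<and> X = Y ** U"
proof (intro exI conjI allI)
  let ?U = "matrix_inv Y ** X"
  fix i j
  have "X *v axis j 1 \<in> latt Y" using sub axis_int unfolding latt_def by blast
  then obtain z where z: "z \<in> int_vecs" "X *v axis j 1 = Y *v z" unfolding latt_def by auto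
  have "?U *v axis j 1 = matrix_inv Y *v (Y *v z)" by (simp add: matrix_vector_mul_assoc[symmetric] z(2))
  also have "\<dots> = z" by (simp add: matrix_vector_mul_assoc matrix_inv_props(2)[OF Y])
  finally have "?U *v axis j 1 \<in> int_vecs" using z(1) by simp
  then show "?U $ i $ j \<in> \<int>" unfolding int_vecs_def mat_axis[symmetric] by blast
next
  show "X = Y ** (matrix_inv Y ** X)"
    by (simp add: matrix_mul_assoc matrix_inv_props(1)[OF Y] matrix_mul_lid)
qed

lemma dual_sub:
  fixes X Y :: "real^'n^'n"
  assumes X: "invertible X" and Y: "invertible Y" and sub: "latt X \<subseteq> latt Y"
  shows "latt (matrix_inv (transpose Y)) \<subseteq> latt (matrix_inv (transpose X))"
proof -
  obtain U where U: "\<And>i j. U$i$j \<in> \<int>" "X = Y ** U" using latt_sub[OF Y sub] by blast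
  have XT: "invertible (transpose X)" "invertible (transpose Y)" using X Y by (simp_all add: transpose_invertible)
  have "matrix_inv (transpose Y) = matrix_inv (transpose X) ** transpose U"
  proof (rule inv_unique[OF XT(2)])
    have "transpose X = transpose U ** transpose Y" using U(2) by (simp add: matrix_transpose_mul)
    then show "matrix_inv (transpose X) ** transpose U ** transpose Y = mat 1"
      by (metis matrix_mul_assoc matrix_inv_props(2)[OF XT(1)])
  qed
  then show ?thesis unfolding latt_def
    using int_mat_vec[of "transpose U"] U(1)
    by (auto simp: matrix_vector_mul_assoc[symmetric] transpose_def)
qed

lemma dual_lat_latt:
  fixes B :: "real^'n^'n"
  assumes B: "invertible B"
  shows "dual_lat (latt B) = latt (matrix_inv (transpose B))"
proof -
  define A where "A = (SOME A :: real^'n^'n. invertible A \<and> latt B = (\<lambda>z. A *v z) ` int_vecs)"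
  have "invertible A \<and> latt B = (\<lambda>z. A *v z) ` int_vecs"
    unfolding A_def by (rule someI[of _ B]) (simp add: B latt_def)
  then have A: "invertible A" "latt B = latt A" unfolding latt_def by auto
  have "dual_lat (latt B) = latt (matrix_inv (transpose A))"
    unfolding dual_lat_def Let_def by (simp add: A_def latt_def)
  also have "\<dots> = latt (matrix_inv (transpose B))"
    using dual_sub[OF A(1) B] dual_sub[OF B A(1)] A(2) by blast
  finally show ?thesis .
qed



lemma int_mult_closed:
  fixes G :: "'a::ab_group_add set" and f :: "int \<Rightarrow> 'a"
  assumes G: "add_subgroup G" and x: "x \<in> G"
    and f0: "f 0 = 0" and fs: "\<And>i. f (i + 1) = f i + x" and fp: "\<And>i. f (i - 1) = f i + - x"
  shows "f k \<in> G"
proof (induction k rule: int_induct[where k=0])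
  case base then show ?case using G f0 unfolding add_subgroup_def by simp
next
  case (step1 i) then show ?case using G fs x unfolding add_subgroup_def by simp
next
  case (step2 i) then show ?case using G fp x unfolding add_subgroup_def by (metis diff_conv_add_uminus)
qed

lemma cyclic_int:
  fixes G :: "int set"
  assumes G: "add_subgroup G" and N: "N \<in> G" "N > 0"
  shows "\<exists>a>0. G = {k * a | k. True}"
proof -
  define a where "a = int (LEAST n::nat. int n \<in> G \<and> 0 < n)"
  have "\<exists>n::nat. int n \<in> G \<and> 0 < n" using N by (intro exI[of _ "nat N"]) simp
  then have "int (LEAST n::nat. int n \<in> G \<and> 0 < n) \<in> G \<and> 0 < (LEAST n::nat. int n \<in> G \<and> 0 < n)"
    by (rule LeastI_ex)
  then have a: "a \<in> G" "0 < a" unfolding a_def by auto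
  have al: "a \<le> b" if "b \<in> G" "0 < b" for b
  proof -
    have "(LEAST n::nat. int n \<in> G \<and> 0 < n) \<le> nat b" by (rule Least_le) (use that in auto)
    then show ?thesis unfolding a_def using that by linarith
  qed
  have mult: "k * a \<in> G" for k
    by (rule int_mult_closed[OF G a(1), of "\<lambda>k. k * a"]) (auto simp: algebra_simps)
  have "G = {k * a | k. True}"
  proof (intro equalityI subsetI)
    fix x assume x: "x \<in> G"
    have "x + (- (x div a)) * a \<in> G" using G x mult[of "- (x div a)"] unfolding add_subgroup_def
      by blast
    moreover have "x + (- (x div a)) * a = x mod a" using minus_div_mult_eq_mod[of x a] by simp
    ultimately have "x mod a \<in> G" by simp
    moreover have "0 \<le> x mod a" "x mod a < a" using a(2) by simp_all
    ultimately have "x mod a = 0" using al[of "x mod a"] by linarith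
    then have "x = (x div a) * a" using div_mult_mod_eq[of x a] by simp
    then show "x \<in> {k * a | k. True}" by blast
  next
    fix x assume "x \<in> {k * a | k. True}" then show "x \<in> G" using mult by auto
  qed
  then show ?thesis using a(2) by blast
qed

lemma hermite:
  fixes H :: "(int \<times> int) set"
  assumes H: "add_subgroup H" and N: "N > 0" "(N, 0) \<in> H" "(0, N) \<in> H"
  shows "\<exists>a b c. a > 0 \<and> b > 0 \<and> H = {(k * a, k * c + l * b) | k l. True}"
proof -
  have sg: "0 \<in> H" "\<And>x y. x \<in> H \<Longrightarrow> y \<in> H \<Longrightarrow> x + y \<in> H" "\<And>x. x \<in> H \<Longrightarrow> - x \<in> H"
    using H unfolding add_subgroup_def by auto
  have P: "add_subgroup (fst ` H)" unfolding add_subgroup_def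
  proof (intro conjI ballI)
    show "0 \<in> fst ` H" using sg(1) by (metis fst_zero image_eqI)
  next
    fix x y assume "x \<in> fst ` H" "y \<in> fst ` H"
    then obtain p q where "p \<in> H" "q \<in> H" "x = fst p" "y = fst q" by auto
    then show "x + y \<in> fst ` H" using sg(2)[of p q] by (metis fst_add image_eqI)
  next
    fix x assume "x \<in> fst ` H"
    then obtain p where "p \<in> H" "x = fst p" by auto
    then show "- x \<in> fst ` H" using sg(3)[of p] by (metis fst_uminus image_eqI)
  qed
  have "N \<in> fst ` H" using N(2) by (metis fst_conv image_eqI)
  then obtain a where a: "a > 0" "fst ` H = {k * a | k. True}" using cyclic_int[OF P _ N(1)] by blast
  define K where "K = {y. (0, y) \<in> H}"
  have K: "add_subgroup K" unfolding add_subgroup_def K_def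
  proof (intro conjI ballI; simp)
    show "(0, 0) \<in> H" using sg(1) by (simp add: zero_prod_def)
    show "(0, x + y) \<in> H" if "(0, x) \<in> H" "(0, y) \<in> H" for x y
      using sg(2)[OF that] by simp
    show "(0, - x) \<in> H" if "(0, x) \<in> H" for x using sg(3)[OF that] by simp
  qed
  have "N \<in> K" using N(3) K_def by simp
  then obtain b where b: "b > 0" "K = {k * b | k. True}" using cyclic_int[OF K _ N(1)] by blast
  have "a \<in> fst ` H" using a(2) by force
  then obtain c where c: "(a, c) \<in> H" by force
  have mul1: "(k * a, k * c) \<in> H" for k
    by (rule int_mult_closed[OF H c, of "\<lambda>k. (k * a, k * c)"]) (auto simp: algebra_simps zero_prod_def)
  have "(0, b) \<in> H" using b(2) K_def by force
  then have mul2: "(0, l * b) \<in> H" for l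
    by (rule int_mult_closed[OF H, of _ "\<lambda>k. (0, k * b)"]) (auto simp: algebra_simps zero_prod_def)
  have "H = {(k * a, k * c + l * b) | k l. True}"
  proof (intro equalityI subsetI)
    fix p assume p: "p \<in> H"
    obtain x y where xy: "p = (x, y)" by force
    have "x \<in> fst ` H" using p xy by force
    then obtain k where k: "x = k * a" using a(2) by auto
    have "(x, y) + - (k * a, k * c) \<in> H" using sg(2)[OF _ sg(3)[OF mul1]] p xy by blast
    moreover have "(x, y) + - (k * a, k * c) = (0, y - k * c)" using k by simp
    ultimately have "y - k * c \<in> K" unfolding K_def by simp
    then obtain l where "y - k * c = l * b" using b(2) by auto
    then have "p = (k * a, k * c + l * b)" using xy k by simp
    then show "p \<in> {(k * a, k * c + l * b) | k l. True}" by blast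
  next
    fix p assume "p \<in> {(k * a, k * c + l * b) | k l. True}"
    then obtain k l where "p = (k * a, k * c + l * b)" by auto
    then have "p = (k * a, k * c) + (0, l * b)" by simp
    then show "p \<in> H" using sg(2)[OF mul1 mul2] by simp
  qed
  then show ?thesis using a(1) b(1) by blast
qed



lemma inner2: "(x::real^2) \<bullet> y = x$1 * y$1 + x$2 * y$2"
  by (simp add: inner_vec_def sum_2)

lemma full_rank:
  fixes A :: "real^2^2" and Q :: "(real^2) set"
  assumes A: "invertible A" and Q0: "0 \<in> Q" and cc: "cocompact (closure ((\<lambda>q. A *v q) ` Q))"
  shows "\<exists>q1\<in>Q. \<exists>q2\<in>Q. q1$1 * q2$2 - q1$2 * q2$1 \<noteq> 0"
proof (rule ccontr)
  assume H: "\<not> ?thesis"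
  let ?S = "(\<lambda>q. A *v q) ` Q"
  have "\<exists>w. w \<noteq> 0 \<and> (\<forall>q\<in>Q. w \<bullet> (A *v q) = 0)"
  proof (cases "Q \<subseteq> {0}")
    case True
    then show ?thesis by (intro exI[of _ "vector [1, 0]"]) (auto simp: vec2_eq)
  next
    case False
    then obtain q0 where q0: "q0 \<in> Q" "q0 \<noteq> 0" by auto
    define a where "a = A *v q0"
    have "a \<noteq> 0"
    proof
      assume "a = 0"
      then have "matrix_inv A *v a = 0" by simp
      then have "q0 = 0" unfolding a_def by (simp add: matrix_vector_mul_assoc matrix_inv_props(2)[OF A])
      then show False using q0 by simp
    qed
    define w where "w = (vector [- a$2, a$1] :: real^2)"
    have "w \<noteq> 0" using \<open>a \<noteq> 0\<close> unfolding w_def vec2_eq by auto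
    moreover have "w \<bullet> (A *v q) = 0" if "q \<in> Q" for q
    proof -
      have "w \<bullet> (A *v q) = det A * (q0$1 * q$2 - q0$2 * q$1)"
        unfolding w_def inner2 a_def mv2 det_2 by (simp add: algebra_simps)
      also have "q0$1 * q$2 - q0$2 * q$1 = 0" using H q0 that by blast
      finally show ?thesis by simp
    qed
    ultimately show ?thesis by blast
  qed
  then obtain w where w: "w \<noteq> 0" "\<And>q. q \<in> Q \<Longrightarrow> w \<bullet> (A *v q) = 0" by blast
  have "closure ?S \<subseteq> {t. w \<bullet> t = 0}"
    by (rule closure_minimal) (use w in \<open>auto intro: closed_hyperplane\<close>)
  obtain K where K: "compact K" "\<And>v. \<exists>t\<in>closure ?S. \<exists>k\<in>K. v = t + k"
    using cc unfolding cocompact_def by blast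
  obtain R where R: "\<And>k. k \<in> K \<Longrightarrow> norm k \<le> R"
    using compact_imp_bounded[OF K(1)] unfolding bounded_iff by blast
  have nw: "norm w > 0" using w(1) by simp
  define v where "v = ((\<bar>R\<bar> + 1) / norm w) *\<^sub>R w"
  obtain t k where tk: "t \<in> closure ?S" "k \<in> K" "v = t + k" using K(2) by blast
  have "w \<bullet> t = 0" using tk(1) \<open>closure ?S \<subseteq> _\<close> by blast
  then have "w \<bullet> v = w \<bullet> k" using tk(3) by (simp add: inner_add_right)
  moreover have "w \<bullet> v = (\<bar>R\<bar> + 1) * norm w"
    unfolding v_def using nw by (simp add: power2_norm_eq_inner[symmetric] power2_eq_square)
  moreover have "\<bar>w \<bullet> k\<bar> \<le> norm w * norm k" by (rule Cauchy_Schwarz_ineq2)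
  moreover have "norm w * norm k \<le> norm w * \<bar>R\<bar>" using R[OF tk(2)] nw by (intro mult_left_mono) auto
  ultimately have "(\<bar>R\<bar> + 1) * norm w \<le> \<bar>R\<bar> * norm w" by (simp add: algebra_simps)
  then show False using nw by (simp add: algebra_simps)
qed

lemma rat_denom:
  assumes "(x::real) \<in> \<rat>"
  shows "\<exists>n0. \<forall>n\<ge>n0. of_nat (fact n) * x \<in> \<int>"
proof -
  obtain a b where ab: "b > 0" "x = of_int a / of_int b" using assms by (rule Rats_cases')
  show ?thesis
  proof (intro exI allI impI)
    fix n assume n: "nat b \<le> n"
    have "nat b dvd fact n" by (rule dvd_fact) (use ab n in auto)
    then obtain r where r: "fact n = nat b * r" by (auto elim: dvdE)
    have "(of_nat (fact n) :: real) = of_int b * of_nat r" using r ab(1) by (simp add: of_nat_mult)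
    then have "of_nat (fact n) * x = of_nat r * of_int a" using ab by simp
    then show "of_nat (fact n) * x \<in> \<int>" by simp
  qed
qed

definition adj2 :: "real^2^2 \<Rightarrow> real^2^2" where
  "adj2 E = (1 / det E) *\<^sub>R vector [vector [E$2$2, - E$1$2], vector [- E$2$1, E$1$1]]"

lemma adj2_inv:
  fixes E :: "real^2^2"
  assumes "det E \<noteq> 0"
  shows "invertible E" "matrix_inv E = adj2 E"
proof -
  show inv: "invertible E" using assms by (simp add: invertible_det_nz)
  define J where "J = (vector [vector [E$2$2, - E$1$2], vector [- E$2$1, E$1$1]] :: real^2^2)"
  have "J ** E = det E *\<^sub>R mat 1"
    unfolding vec_eq_iff forall_2 mm2 J_def by (simp add: mat_def det_2 algebra_simps)
  have "adj2 E ** E = (1 / det E) *\<^sub>R (J ** E)"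
    unfolding adj2_def J_def[symmetric] by (simp add: scalar_matrix_assoc)
  also have "\<dots> = mat 1" using \<open>J ** E = det E *\<^sub>R mat 1\<close> assms by simp
  finally have a2: "adj2 E ** E = mat 1" .
  show "matrix_inv E = adj2 E" by (rule inv_unique[OF inv a2])
qed


lemma mv_neg: "(E::real^2^2) *v (- x) = - (E *v x)"
  by (simp add: vec2_eq mv2)

lemma sg_lin_image:
  fixes E :: "real^2^2"
  assumes "add_subgroup Q" shows "add_subgroup ((\<lambda>q. E *v q) ` Q)"
  using assms unfolding add_subgroup_def
proof (intro conjI ballI)
  assume a: "0 \<in> Q \<and> (\<forall>x\<in>Q. \<forall>y\<in>Q. x + y \<in> Q) \<and> (\<forall>x\<in>Q. - x \<in> Q)"
  show "0 \<in> (*v) E ` Q" using a by (metis matrix_vector_mult_0_right rev_image_eqI)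
  show "x + y \<in> (*v) E ` Q" if x: "x \<in> (*v) E ` Q" and y: "y \<in> (*v) E ` Q" for x y
  proof -
    obtain p where "p \<in> Q" "x = E *v p" using x by (rule imageE) simp
    moreover obtain q where "q \<in> Q" "y = E *v q" using y by (rule imageE) simp
    ultimately
    have "p + q \<in> Q" "x + y = E *v (p + q)" using a by (auto simp: matrix_vector_right_distrib)
    then show ?thesis by blast
  qed
  show "- x \<in> (*v) E ` Q" if x: "x \<in> (*v) E ` Q" for x
  proof -
    obtain p where "p \<in> Q" "x = E *v p" using x by (rule imageE) simp
    then have "- p \<in> Q" "- x = E *v (- p)" using a by (auto simp: mv_neg)
    then show ?thesis by blast
  qed
qed

lemma vec2_add: "vector [a, b] + vector [c, d] = (vector [a + c, b + d] :: real^2)"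
  by (simp add: vec2_eq)
lemma vec2_minus: "- vector [a, b] = (vector [- a, - b] :: real^2)"
  by (simp add: vec2_eq)
lemma vec2_zero: "(0::real^2) = vector [0, 0]"
  by (simp add: vec2_eq)
lemma vec2_scale: "c *\<^sub>R vector [a, b] = (vector [c * a, c * b] :: real^2)"
  by (simp add: vec2_eq)
lemma vec2_expand: "(v::real^2) = vector [v$1, v$2]"
  by (simp add: vec2_eq)

lemma lattice_piece:
  fixes Q :: "(real^2) set" and N :: nat
  assumes Q: "add_subgroup Q" and Z: "int_vecs \<subseteq> Q" and N: "N > 0"
  shows "\<exists>G::real^2^2. invertible G \<and> latt G = {v \<in> Q. \<forall>i. of_nat N * v$i \<in> \<int>}
           \<and> (\<forall>i j. matrix_inv G $ i $ j \<in> \<int>)"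
proof -
  define H where "H = {p :: int \<times> int. (vector [of_int (fst p) / of_nat N, of_int (snd p) / of_nat N] :: real^2) \<in> Q}"
  have sgQ: "0 \<in> Q" "\<And>x y. x \<in> Q \<Longrightarrow> y \<in> Q \<Longrightarrow> x + y \<in> Q" "\<And>x. x \<in> Q \<Longrightarrow> - x \<in> Q"
    using Q unfolding add_subgroup_def by auto
  have H: "add_subgroup H" unfolding add_subgroup_def
  proof (intro conjI ballI)
    show "0 \<in> H" using sgQ(1) unfolding H_def by (simp add: zero_prod_def vec2_zero)
  next
    fix p q assume pq: "p \<in> H" "q \<in> H"
    have "vector [of_int (fst p) / of_nat N, of_int (snd p) / of_nat N]
       + vector [of_int (fst q) / of_nat N, of_int (snd q) / of_nat N] \<in> Q"
      using pq unfolding H_def by (intro sgQ(2)) auto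
    then show "p + q \<in> H" unfolding H_def by (simp add: vec2_add add_divide_distrib)
  next
    fix p assume "p \<in> H"
    then have "- vector [of_int (fst p) / of_nat N, of_int (snd p) / of_nat N] \<in> Q"
      unfolding H_def by (intro sgQ(3)) auto
    then show "- p \<in> H" unfolding H_def by (simp add: vec2_minus)
  qed
  have "(vector [1, 0] :: real^2) \<in> int_vecs" "(vector [0, 1] :: real^2) \<in> int_vecs"
    unfolding int_vecs2 by simp_all
  then have e1: "(vector [1, 0] :: real^2) \<in> Q" "(vector [0, 1] :: real^2) \<in> Q" using Z by auto
  have "(int N, 0) \<in> H" "(0, int N) \<in> H" unfolding H_def using e1 N by simp_all
  then obtain a b c where abc: "a > 0" "b > 0" "H = {(k * a, k * c + l * b) | k l. True}"
    using hermite[OF H, of "int N"] N by auto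
  define G where "G = (vector [vector [of_int a / of_nat N, 0], vector [of_int c / of_nat N, of_int b / of_nat N]] :: real^2^2)"
  have Gk: "G *v vector [of_int k, of_int l] = vector [of_int (k * a) / of_nat N, of_int (k * c + l * b) / of_nat N]" for k l
    unfolding vec2_eq mv2 G_def using N by (simp add: field_simps)
  have detG: "det G \<noteq> 0" unfolding G_def det_2 using abc N by simp
  have Gi: "invertible G" using detG by (simp add: invertible_det_nz)
  have lG: "latt G = {v \<in> Q. \<forall>i. of_nat N * v$i \<in> \<int>}"
  proof (intro equalityI subsetI)
    fix v assume "v \<in> latt G"
    then obtain z where z: "z \<in> int_vecs" "v = G *v z" unfolding latt_def by auto
    obtain k l where kl: "z = vector [of_int k, of_int l]" using z(1) unfolding int_vecs2
      by (metis Ints_cases vec2_expand)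
    have v: "v = vector [of_int (k * a) / of_nat N, of_int (k * c + l * b) / of_nat N]" using z(2) kl Gk by simp
    have "(k * a, k * c + l * b) \<in> H" using abc(3) by blast
    then have "v \<in> Q" unfolding H_def v by simp
    moreover have "\<forall>i. of_nat N * v$i \<in> \<int>" unfolding forall_2 v using N by simp
    ultimately show "v \<in> {v \<in> Q. \<forall>i. of_nat N * v$i \<in> \<int>}" by simp
  next
    fix v assume v: "v \<in> {v \<in> Q. \<forall>i. of_nat N * v$i \<in> \<int>}"
    obtain x where x: "of_nat N * v$1 = of_int x" using v by (metis (mono_tags, lifting) Ints_cases mem_Collect_eq)
    obtain y where y: "of_nat N * v$2 = of_int y" using v by (metis (mono_tags, lifting) Ints_cases mem_Collect_eq)
    have vv: "v = vector [of_int x / of_nat N, of_int y / of_nat N]"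
      using x y N unfolding vec2_eq by (simp add: field_simps)
    then have "(x, y) \<in> H" unfolding H_def using v by simp
    then obtain k l where "x = k * a" "y = k * c + l * b" using abc(3) by auto
    then have "v = G *v vector [of_int k, of_int l]" using vv Gk by simp
    moreover have "vector [of_int k, of_int l] \<in> (int_vecs :: (real^2) set)" unfolding int_vecs2 by simp
    ultimately show "v \<in> latt G" unfolding latt_def by blast
  qed
  have "latt (mat 1 :: real^2^2) \<subseteq> latt G"
  proof
    fix v :: "real^2" assume "v \<in> latt (mat 1)"
    then have "v \<in> int_vecs" unfolding latt_def by auto
    then have "v \<in> Q" "\<forall>i. of_nat N * v$i \<in> \<int>" using Z unfolding int_vecs_def by auto
    then show "v \<in> latt G" unfolding lG by simp
  qed
  then obtain U where U: "\<And>i j. U$i$j \<in> \<int>" "mat 1 = G ** U" using latt_sub[OF Gi] by blast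
  have "matrix_inv G = matrix_inv G ** (G ** U)" unfolding U(2)[symmetric] by (simp add: matrix_mul_rid)
  also have "\<dots> = U" by (simp add: matrix_mul_assoc matrix_inv_props(2)[OF Gi] matrix_mul_lid)
  finally have "matrix_inv G = U" .
  then show ?thesis using Gi lG U(1) by auto
qed

lemma tau_exists:
  fixes S :: "(real^2) set"
  assumes "off_rational S"
  shows "\<exists>T. is_tau S T"
proof -
  obtain A :: "real^2^2" and Q where AQ: "invertible A" "add_subgroup Q" "Q \<subseteq> rat_vecs"
    "S = (\<lambda>q. A *v q) ` Q" and cc: "cocompact (closure S)"
    using assms unfolding off_rational_def by blast
  obtain q1 q2 where q: "q1 \<in> Q" "q2 \<in> Q" "q1$1 * q2$2 - q1$2 * q2$1 \<noteq> 0"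
    using full_rank[OF AQ(1) _ cc[unfolded AQ(4)]] AQ(2) unfolding add_subgroup_def by blast
  define E where "E = (vector [vector [q1$1, q2$1], vector [q1$2, q2$2]] :: real^2^2)"
  have dE: "det E \<noteq> 0" using q(3) unfolding E_def det_2 by (simp add: algebra_simps)
  have Ei: "invertible E" "matrix_inv E = adj2 E" using adj2_inv[OF dE] by auto
  have Eq: "E *v vector [1, 0] = q1" "E *v vector [0, 1] = q2" unfolding E_def vec2_eq mv2 by simp_all
  define F where "F = matrix_inv E"
  have FE: "F ** E = mat 1" "E ** F = mat 1" unfolding F_def using matrix_inv_props[OF Ei(1)] by auto
  have Frat: "F$i$j \<in> \<rat>" for i j
  proof -
    have r: "q1$k \<in> \<rat>" "q2$k \<in> \<rat>" for k using q(1,2) AQ(3) unfolding rat_vecs_def by auto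
    show ?thesis unfolding F_def Ei(2) unfolding adj2_def E_def det_2
      using r exhaust_2[of i] exhaust_2[of j] by (auto intro!: Rats_divide Rats_mult Rats_diff simp: Rats_minus_iff)
  qed
  define Q' where "Q' = (\<lambda>q. F *v q) ` Q"
  define A' where "A' = A ** E"
  have A'i: "invertible A'" unfolding A'_def using AQ(1) Ei(1) by (simp add: invertible_mult)
  have Q'sg: "add_subgroup Q'" unfolding Q'_def by (rule sg_lin_image[OF AQ(2)])
  have Q'rat: "Q' \<subseteq> rat_vecs"
  proof
    fix v assume "v \<in> Q'"
    then obtain q where "q \<in> Q" "v = F *v q" unfolding Q'_def by auto
    then show "v \<in> rat_vecs" using AQ(3) Frat unfolding rat_vecs_def matrix_vector_mult_def
      by (auto intro!: Rats_sum Rats_mult)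
  qed
  have SQ': "S = (\<lambda>q. A' *v q) ` Q'"
  proof -
    have "A' *v (F *v q) = A *v q" for q
      unfolding A'_def by (simp add: matrix_vector_mul_assoc FE(2) flip: matrix_mul_assoc)
    then show ?thesis unfolding AQ(4) Q'_def image_image by simp
  qed
  have b1: "vector [1, 0] \<in> Q'" "vector [0, 1] \<in> Q'"
  proof -
    have "F *v q1 = vector [1, 0]" "F *v q2 = vector [0, 1]"
      unfolding Eq[symmetric] by (simp_all add: matrix_vector_mul_assoc FE(1))
    then show "vector [1, 0] \<in> Q'" "vector [0, 1] \<in> Q'" unfolding Q'_def using q by force+
  qed
  have Zsub: "int_vecs \<subseteq> Q'"
  proof
    fix z :: "real^2" assume "z \<in> int_vecs"
    then obtain k l where kl: "z = vector [of_int k, of_int l]" unfolding int_vecs2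
      by (metis Ints_cases vec2_expand)
    have m1: "of_int k *\<^sub>R (vector [1, 0] :: real^2) \<in> Q'"
      by (rule int_mult_closed[OF Q'sg b1(1), of "\<lambda>k. of_int k *\<^sub>R vector [1, 0]"])
         (auto simp: algebra_simps)
    have m2: "of_int l *\<^sub>R (vector [0, 1] :: real^2) \<in> Q'"
      by (rule int_mult_closed[OF Q'sg b1(2), of "\<lambda>k. of_int k *\<^sub>R vector [0, 1]"])
         (auto simp: algebra_simps)
    have "z = of_int k *\<^sub>R vector [1, 0] + of_int l *\<^sub>R vector [0, 1]"
      unfolding kl vec2_scale vec2_add by simp
    then show "z \<in> Q'" using m1 m2 Q'sg unfolding add_subgroup_def by auto
  qed
  define Hn where "Hn n = {v \<in> Q'. \<forall>i. of_nat (fact n) * v$i \<in> \<int>}" for n :: nat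
  have "\<forall>n. \<exists>G::real^2^2. invertible G \<and> latt G = Hn n \<and> (\<forall>i j. matrix_inv G $ i $ j \<in> \<int>)"
    unfolding Hn_def
  proof
    fix n
    show "\<exists>G::real^2^2. invertible G \<and> latt G = {v \<in> Q'. \<forall>i. of_nat (fact n) * v$i \<in> \<int>} \<and> (\<forall>i j. matrix_inv G $ i $ j \<in> \<int>)"
      using lattice_piece[OF Q'sg Zsub, of "fact n"] by simp
  qed
  then obtain G where G: "\<And>n. invertible (G n)" "\<And>n. latt (G n) = Hn n"
    "\<And>n i j. matrix_inv (G n) $ i $ j \<in> \<int>" by metis
  define M where "M n = matrix_inv (G n)" for n
  have Mi: "invertible (M n)" for n unfolding M_def by (rule invertible_inv[OF G(1)])
  have MM: "matrix_inv (M n) = G n" for n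
    unfolding M_def by (rule inv_unique[OF invertible_inv[OF G(1)] matrix_inv_props(1)[OF G(1)]])
  have nest: "Hn n \<subseteq> Hn (Suc n)" for n
  proof
    fix v assume v: "v \<in> Hn n"
    have "of_nat (fact (Suc n)) * v$i \<in> \<int>" for i :: 2
    proof -
      have "of_nat (fact n) * v$i \<in> \<int>" using v unfolding Hn_def by blast
      then have "of_nat (Suc n) * (of_nat (fact n) * v$i) \<in> \<int>" by (rule Ints_mult[OF Ints_of_nat])
      moreover have "of_nat (fact (Suc n)) * v$i = of_nat (Suc n) * (of_nat (fact n) * v$i)"
        by (simp only: fact_Suc of_nat_mult mult.assoc) simp
      ultimately show ?thesis by metis
    qed
    then show "v \<in> Hn (Suc n)" using v unfolding Hn_def by blast
  qed
  have un: "Q' = (\<Union>n. Hn n)"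
  proof (intro equalityI subsetI)
    fix v assume v: "v \<in> Q'"
    then have r: "v$1 \<in> \<rat>" "v$2 \<in> \<rat>" using Q'rat unfolding rat_vecs_def by auto
    obtain n1 where n1: "\<And>n. n \<ge> n1 \<Longrightarrow> of_nat (fact n) * v$1 \<in> \<int>" using rat_denom[OF r(1)] by blast
    obtain n2 where n2: "\<And>n. n \<ge> n2 \<Longrightarrow> of_nat (fact n) * v$2 \<in> \<int>" using rat_denom[OF r(2)] by blast
    have "v \<in> Hn (n1 + n2)" unfolding Hn_def using v n1 n2 by (simp add: forall_2)
    then show "v \<in> (\<Union>n. Hn n)" by blast
  next
    fix v assume "v \<in> (\<Union>n. Hn n)" then show "v \<in> Q'" unfolding Hn_def by auto
  qed
  have "is_tau S (\<Union>j. {of_int m * (det A' / det (M j)) | m. True})"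
    unfolding is_tau_def
  proof (intro exI[of _ A'] exI[of _ Q'] exI[of _ M] conjI allI A'i Q'sg Q'rat SQ' Mi)
    show "M j $ i $ k \<in> \<int>" for j i k unfolding M_def by (rule G(3))
    show "(\<lambda>z. matrix_inv (M j) *v z) ` int_vecs \<subseteq> (\<lambda>z. matrix_inv (M (Suc j)) *v z) ` int_vecs" for j
      using nest[of j] G(2) unfolding MM latt_def by metis
    show "Q' = (\<Union>j. (\<lambda>z. matrix_inv (M j) *v z) ` int_vecs)"
      unfolding MM un using G(2) unfolding latt_def by metis
  qed simp
  then show ?thesis by blast
qed



lemma xi_chain:
  fixes \<xi> :: "real set"
  assumes off: "off_rational ((vec :: real \<Rightarrow> real^1) ` \<xi>)"
  shows "\<exists>g::nat \<Rightarrow> real. (\<forall>j. g j > 0) \<and> (\<forall>j m. of_int m * g j \<in> \<xi>) \<and>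
     (\<forall>j. \<exists>m::int. g j = of_int m * g (Suc j)) \<and> (\<forall>y\<in>\<xi>. \<exists>j m. y = of_int m * g j)"
proof -
  obtain A1 :: "real^1^1" and Q1 where AQ: "add_subgroup Q1" "Q1 \<subseteq> rat_vecs"
    "(vec :: real \<Rightarrow> real^1) ` \<xi> = (\<lambda>q. A1 *v q) ` Q1"
    and sg: "add_subgroup ((vec :: real \<Rightarrow> real^1) ` \<xi>)"
    and cc: "cocompact (closure ((vec :: real \<Rightarrow> real^1) ` \<xi>))"
    using off unfolding off_rational_def by blast
  have vinj: "(vec x :: real^1) = vec y \<longleftrightarrow> x = y" for x y by (metis vec_component)
  have xsg: "0 \<in> \<xi>" "\<And>x y. x \<in> \<xi> \<Longrightarrow> y \<in> \<xi> \<Longrightarrow> x + y \<in> \<xi>" "\<And>x. x \<in> \<xi> \<Longrightarrow> - x \<in> \<xi>"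
  proof -
    have s: "0 \<in> (vec :: real \<Rightarrow> real^1) ` \<xi>" "\<And>a b. a \<in> (vec :: real \<Rightarrow> real^1) ` \<xi> \<Longrightarrow> b \<in> vec ` \<xi> \<Longrightarrow> a + b \<in> vec ` \<xi>"
      "\<And>a. a \<in> (vec :: real \<Rightarrow> real^1) ` \<xi> \<Longrightarrow> - a \<in> vec ` \<xi>" using sg unfolding add_subgroup_def by auto
    show "0 \<in> \<xi>" using s(1) vinj by (metis imageE vec_0)
    show "x + y \<in> \<xi>" if "x \<in> \<xi>" "y \<in> \<xi>" for x y
      using s(2)[of "vec x" "vec y"] that vinj by (metis image_eqI imageE vec_add)
    show "- x \<in> \<xi>" if "x \<in> \<xi>" for x
      using s(3)[of "vec x"] that vinj by (metis image_eqI imageE vec_neg)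
  qed
  define \<alpha> where "\<alpha> = A1$1$1"
  have rat: "\<exists>r\<in>\<rat>. y = \<alpha> * r" if "y \<in> \<xi>" for y
  proof -
    have "(vec y :: real^1) \<in> (\<lambda>q. A1 *v q) ` Q1" using AQ(3) that by blast
    then obtain q where q: "q \<in> Q1" "vec y = A1 *v q" by auto
    have "y = (A1 *v q) $ 1" using q(2) by (metis vec_component)
    also have "\<dots> = \<alpha> * q$1" unfolding \<alpha>_def by (simp add: matrix_vector_mult_def sum_1)
    finally show ?thesis using q(1) AQ(2) unfolding rat_vecs_def by blast
  qed
  have "\<exists>y0\<in>\<xi>. y0 \<noteq> 0"
  proof (rule ccontr)
    assume "\<not> ?thesis"
    then have "(vec :: real \<Rightarrow> real^1) ` \<xi> \<subseteq> {0}" by auto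
    then have "closure ((vec :: real \<Rightarrow> real^1) ` \<xi>) \<subseteq> {0}" by (simp add: closure_minimal)
    moreover obtain K :: "(real^1) set" where K: "compact K" "\<And>v. \<exists>t\<in>closure (vec ` \<xi>). \<exists>k\<in>K. v = t + k"
      using cc unfolding cocompact_def by blast
    ultimately have "UNIV \<subseteq> K" by (metis add_0 singletonD subsetD subsetI)
    then have "bounded (UNIV :: (real^1) set)" using compact_imp_bounded[OF K(1)] bounded_subset by blast
    then show False by simp
  qed
  then obtain y0 where y0: "y0 \<in> \<xi>" "y0 \<noteq> 0" by blast
  obtain r0 where r0: "r0 \<in> \<rat>" "y0 = \<alpha> * r0" using rat[OF y0(1)] by blast
  have a0: "\<alpha> \<noteq> 0" "r0 \<noteq> 0" using r0 y0 by auto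
  obtain n0 where n0: "\<And>n. n \<ge> n0 \<Longrightarrow> of_nat (fact n) * r0 \<in> \<int>" using rat_denom[OF r0(1)] by blast
  define P where "P n = {y \<in> \<xi>. of_nat (fact n) * (y / \<alpha>) \<in> \<int>}" for n
  have Pcyc: "\<exists>g>0. P n = {of_int m * g | m. True}" if n: "n \<ge> n0" for n
  proof -
    define F :: real where "F = of_nat (fact n)"
    have F0: "F > 0" unfolding F_def by simp
    define G where "G = {k::int. \<alpha> * of_int k / F \<in> \<xi>}"
    have Gsg: "add_subgroup G" unfolding add_subgroup_def G_def
    proof (intro conjI ballI; simp)
      show "0 \<in> \<xi>" by (rule xsg(1))
      show "\<alpha> * (of_int x + of_int y) / F \<in> \<xi>" if "\<alpha> * of_int x / F \<in> \<xi>" "\<alpha> * of_int y / F \<in> \<xi>" for x y :: int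
      proof -
        have "\<alpha> * (of_int x + of_int y) / F = \<alpha> * of_int x / F + \<alpha> * of_int y / F" by (simp add: distrib_left add_divide_distrib)
        then show ?thesis using xsg(2)[OF that] by simp
      qed
      show "- (\<alpha> * of_int x / F) \<in> \<xi>" if "\<alpha> * of_int x / F \<in> \<xi>" for x :: int
        using xsg(3)[OF that] by simp
    qed
    obtain K0 where K0: "F * r0 = of_int K0" using n0[OF n] unfolding F_def by (metis Ints_cases)
    have "K0 \<noteq> 0" using K0 F0 a0 by auto
    have "\<alpha> * of_int K0 / F = \<alpha> * r0" unfolding K0[symmetric] using F0 by simp
    then have "K0 \<in> G" unfolding G_def using r0 y0 by simp
    then have "\<bar>K0\<bar> \<in> G" using Gsg unfolding add_subgroup_def by (cases "K0 \<ge> 0") auto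
    moreover have "\<bar>K0\<bar> > 0" using \<open>K0 \<noteq> 0\<close> by simp
    ultimately obtain a where a: "a > 0" "G = {k * a | k. True}" using cyclic_int[OF Gsg] by blast
    define g where "g = \<bar>\<alpha>\<bar> * of_int a / F"
    have g0: "g > 0" unfolding g_def using a a0 F0 by simp
    have "a \<in> G" using a(2) by (metis (mono_tags, lifting) mem_Collect_eq mult_1)
    have sgn: "\<exists>s::int. \<bar>\<alpha>\<bar> = of_int s * \<alpha> \<and> (s = 1 \<or> s = -1)"
      by (cases "\<alpha> \<ge> 0") (auto intro: exI[of _ 1] exI[of _ "-1"])
    then obtain s :: int where s: "\<bar>\<alpha>\<bar> = of_int s * \<alpha>" "s = 1 \<or> s = -1" by blast
    have "P n = {of_int m * g | m. True}"
    proof (intro equalityI subsetI)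
      fix y assume y: "y \<in> P n"
      then obtain k where k: "F * (y / \<alpha>) = of_int k" unfolding P_def F_def by (auto elim: Ints_cases)
      have yk: "y = \<alpha> * of_int k / F" using k F0 a0 by (simp add: field_simps)
      then have "k \<in> G" unfolding G_def using y P_def by simp
      then obtain m where "k = m * a" using a(2) by auto
      then have "y = of_int (m * s) * g" unfolding yk g_def s(1) using s(2) by (auto simp: field_simps)
      then show "y \<in> {of_int m * g | m. True}" by blast
    next
      fix y assume "y \<in> {of_int m * g | m. True}"
      then obtain m where m: "y = of_int m * g" by auto
      have "m * s * a \<in> G" using a(2) by auto
      moreover have "y = \<alpha> * of_int (m * s * a) / F" unfolding m g_def s(1) by simp
      ultimately have "y \<in> \<xi>" unfolding G_def by simp
      moreover have "F * (y / \<alpha>) = of_int (m * s * a)"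
        unfolding \<open>y = \<alpha> * of_int (m * s * a) / F\<close> using F0 a0 by simp
      ultimately show "y \<in> P n" unfolding P_def F_def by (metis (mono_tags, lifting) Ints_of_int mem_Collect_eq)
    qed
    then show ?thesis using g0 by blast
  qed
  have "\<forall>j. \<exists>g>0. P (n0 + j) = {of_int m * g | m. True}" using Pcyc by simp
  then obtain g where g: "\<And>j. g j > 0" "\<And>j. P (n0 + j) = {of_int m * g j | m. True}" by metis
  have Pmono: "P n \<subseteq> P (Suc n)" for n
  proof
    fix y assume y: "y \<in> P n"
    have "of_nat (fact n) * (y / \<alpha>) \<in> \<int>" using y unfolding P_def by blast
    then have "of_nat (Suc n) * (of_nat (fact n) * (y / \<alpha>)) \<in> \<int>" by (rule Ints_mult[OF Ints_of_nat])
    moreover have "of_nat (fact (Suc n)) * (y / \<alpha>) = of_nat (Suc n) * (of_nat (fact n) * (y / \<alpha>))"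
      by (simp only: fact_Suc of_nat_mult mult.assoc) simp
    ultimately show "y \<in> P (Suc n)" using y unfolding P_def by (metis (mono_tags, lifting) mem_Collect_eq)
  qed
  show ?thesis
  proof (intro exI[of _ g] conjI allI ballI)
    show "g j > 0" for j by (rule g(1))
    show "of_int m * g j \<in> \<xi>" for j m using g(2)[of j] unfolding P_def by blast
    show "\<exists>m::int. g j = of_int m * g (Suc j)" for j
    proof -
      have "of_int 1 * g j \<in> P (n0 + j)" using g(2)[of j] by blast
      then have "g j \<in> P (n0 + Suc j)" using Pmono[of "n0 + j"] by auto
      then show ?thesis using g(2)[of "Suc j"] by auto
    qed
    show "\<exists>j m. y = of_int m * g j" if y: "y \<in> \<xi>" for y
    proof -
      obtain r where r: "r \<in> \<rat>" "y = \<alpha> * r" using rat[OF y] by blast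
      obtain n1 where n1: "\<And>n. n \<ge> n1 \<Longrightarrow> of_nat (fact n) * r \<in> \<int>" using rat_denom[OF r(1)] by blast
      have "y / \<alpha> = r" using r a0 by simp
      then have "of_nat (fact (n0 + n1)) * (y / \<alpha>) \<in> \<int>" by (simp only:) (rule n1, simp)
      then have "y \<in> P (n0 + n1)" unfolding P_def using y by blast
      then show ?thesis using g(2)[of n1] by auto
    qed
  qed
qed



lemma step_U:
  fixes X Y :: "real^2^2"
  assumes X: "invertible X" and Y: "invertible Y"
    and sub: "latt (matrix_inv X) \<subseteq> latt (matrix_inv Y)"
  shows "\<exists>U. (\<forall>i j. U$i$j \<in> \<int>) \<and> Y = U ** X"
proof -
  obtain U where U: "\<And>i j. U$i$j \<in> \<int>" "matrix_inv X = matrix_inv Y ** U"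
    using latt_sub[OF invertible_inv[OF Y] sub] by blast
  have "Y ** matrix_inv X = U"
    unfolding U(2) by (simp add: matrix_mul_assoc matrix_inv_props(1)[OF Y] matrix_mul_lid)
  then have "U ** X = Y"
    by (metis matrix_mul_assoc matrix_inv_props(2)[OF X] matrix_mul_rid)
  then show ?thesis using U(1) by metis
qed

lemma det_int: "(\<And>i j. (U::real^2^2)$i$j \<in> \<int>) \<Longrightarrow> det U \<in> \<int>"
  unfolding det_2 by (intro Ints_diff Ints_mult) auto

lemma det_inv: fixes A :: "real^'n^'n" assumes "invertible A" shows "det (matrix_inv A) = 1 / det A"
proof -
  have "det A * det (matrix_inv A) = 1"
    using matrix_inv_props(1)[OF assms] by (metis det_I det_mul)
  moreover then have "det A \<noteq> 0" by auto
  ultimately show ?thesis by (simp add: field_simps)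
qed

lemma latt_mult: "latt (A ** X) = (\<lambda>v. A *v v) ` latt X"
  unfolding latt_def image_image by (simp add: matrix_vector_mul_assoc)

lemma dot_transpose: "((X::real^2^2) *v n) \<bullet> y = n \<bullet> (transpose X *v y)"
  by (simp add: inner2 mv2 transpose_def algebra_simps)

lemma half_not_int: "(1/2::real) \<notin> \<int>"
proof
  assume "(1/2::real) \<in> \<int>"
  then obtain k::int where "1/2 = (of_int k :: real)" by (auto elim: Ints_cases)
  then have "(1::real) = of_int (2 * k)" by simp
  then have "1 = 2 * k" by linarith
  then show False by presburger
qed



theorem proposition5p5:
  fixes S :: "(real^2) set" and \<xi> :: "real set"
  assumes "off_rational S"
    and "off_rational ((vec :: real \<Rightarrow> real^1) ` \<xi>)"
    and "\<xi> \<subseteq> tau S"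
  shows "\<exists>\<Gamma> :: nat \<Rightarrow> heis set.
           (\<forall>j. heis_lattice (\<Gamma> j)) \<and> (\<forall>j. \<Gamma> (Suc j) \<subseteq> \<Gamma> j) \<and>
           S_Gamma \<Gamma> = S \<and> xi_Gamma \<Gamma> = \<xi> \<and>
           (closure S = UNIV \<longrightarrow> (\<Inter>j. heis_p ` \<Gamma> j) = {0}) \<and>
           (closure S = UNIV \<and> closure \<xi> = UNIV \<longrightarrow> (\<Inter>j. \<Gamma> j) = {heis_one})"
proof -
  have "is_tau S (tau S)" unfolding tau_def using tau_exists[OF assms(1)] by (rule someI_ex)
  then obtain A :: "real^2^2" and Q and M :: "nat \<Rightarrow> real^2^2" where
     iA: "invertible A" and H2: "add_subgroup Q" and H3: "Q \<subseteq> rat_vecs" and SQ: "S = (\<lambda>q. A *v q) ` Q" and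
     H5: "\<forall>j. invertible (M j) \<and> (\<forall>i k. M j $ i $ k \<in> \<int>)" and
     H6: "\<forall>j. (\<lambda>z. matrix_inv (M j) *v z) ` int_vecs \<subseteq> (\<lambda>z. matrix_inv (M (Suc j)) *v z) ` int_vecs" and
     H7: "Q = (\<Union>j. (\<lambda>z. matrix_inv (M j) *v z) ` int_vecs)" and
     T: "tau S = (\<Union>j. {of_int m * (det A / det (M j)) | m. True})"
    unfolding is_tau_def by (elim exE conjE) (rule that)
  have Mi: "\<And>j. invertible (M j)" "\<And>j i k. M j $ i $ k \<in> \<int>" using H5 by simp_all
  have nest: "\<And>j. latt (matrix_inv (M j)) \<subseteq> latt (matrix_inv (M (Suc j)))" using H6 unfolding latt_def by simp
  have Qun: "Q = (\<Union>j. latt (matrix_inv (M j)))" using H7 unfolding latt_def by simp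
  obtain g where G: "(\<forall>j. g j > 0) \<and> (\<forall>j m. of_int m * g j \<in> \<xi>) \<and>
     (\<forall>j. \<exists>m::int. g j = of_int m * g (Suc j)) \<and> (\<forall>y\<in>\<xi>. \<exists>j m. y = of_int m * g j)"
    using xi_chain[OF assms(2)] by (elim exE) (rule that)
  have g: "\<And>j. g j > 0" "\<And>j m. of_int m * g j \<in> \<xi>"
    "\<And>j. \<exists>m::int. g j = of_int m * g (Suc j)" "\<And>y. y \<in> \<xi> \<Longrightarrow> \<exists>j m. y = of_int m * g j"
    using G by simp_all
  have mono: "latt (matrix_inv (M k)) \<subseteq> latt (matrix_inv (M k'))" if "k \<le> k'" for k k'
    using lift_Suc_mono_le[of "\<lambda>j. latt (matrix_inv (M j))", OF nest that] by blast
  have stepU: "\<exists>U. (\<forall>i j. U$i$j \<in> \<int>) \<and> M k' = U ** M k" if "k \<le> k'" for k k'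
    using step_U[OF Mi(1) Mi(1) mono[OF that]] by blast
  have "\<exists>K m. g j = of_int m * (det A / det (M K))" for j
  proof -
    have "of_int 1 * g j \<in> tau S" using g(2) assms(3) by blast
    then show ?thesis unfolding T by auto
  qed
  then obtain K mm where K: "\<And>j. g j = of_int (mm j) * (det A / det (M (K j)))" by metis
  define kk where "kk j = j + (\<Sum>i\<le>j. K i)" for j
  have kkK: "K j \<le> kk j" "j \<le> kk j" for j
    unfolding kk_def using member_le_sum[of j "{..j}" K] by auto
  have kkS: "kk j \<le> kk (Suc j)" for j by (simp add: kk_def)
  define Ai where "Ai = matrix_inv A"
  define B where "B j = transpose (M (kk j) ** Ai)" for j
  define \<eta> where "\<eta> j = 1 / g j" for j
  have dA: "det A \<noteq> 0" using iA by (simp add: invertible_det_nz)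
  have dM: "det (M j) \<noteq> 0" for j using Mi(1) by (simp add: invertible_det_nz)
  have detB: "det (B j) = det (M (kk j)) / det A" for j
    unfolding B_def Ai_def by (simp add: det_transpose det_mul det_inv[OF iA])
  have dB0: "det (B j) \<noteq> 0" for j using detB dA dM by simp
  have \<eta>0: "\<eta> j > 0" for j using g(1) by (simp add: \<eta>_def)
  have zmB: "zm (\<eta> j) (det (B j))" for j
  proof -
    obtain U where U: "\<And>a b. U$a$b \<in> \<int>" "M (kk j) = U ** M (K j)" using stepU[OF kkK(1)] by blast
    obtain dU where dU: "det U = of_int dU" using det_int[OF U(1)] by (auto elim: Ints_cases)
    have "det (B j) = det U * det (M (K j)) / det A" unfolding detB U(2) by (simp add: det_mul)
    also have "\<dots> = of_int (dU * mm j) * \<eta> j"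
      unfolding \<eta>_def dU using K[of j] g(1)[of j] dA dM[of "K j"] by (simp add: field_simps)
    finally show ?thesis unfolding zm_def by blast
  qed
  have "\<exists>Cm. (\<forall>a b. Cm$a$b \<in> \<int>) \<and> B (Suc j) = B j ** Cm" for j
  proof -
    obtain U where U: "\<And>a b. U$a$b \<in> \<int>" "M (kk (Suc j)) = U ** M (kk j)" using stepU[OF kkS] by blast
    have "B (Suc j) = B j ** transpose U"
      unfolding B_def U(2) by (simp add: matrix_transpose_mul matrix_mul_assoc)
    moreover have "\<forall>a b. transpose U $ a $ b \<in> \<int>" using U(1) by (simp add: transpose_def)
    ultimately show ?thesis by blast
  qed
  then obtain C where C: "\<And>j a b. C j $ a $ b \<in> \<int>" "\<And>j. B (Suc j) = B j ** C j" by metis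
  define uv where "uv = rec_nat (0::real, 0::real) (\<lambda>j p. (psi (B j) (fst p) (snd p) (C j$1$1) (C j$2$1) - psi (B j ** C j) 0 0 1 0,
      psi (B j) (fst p) (snd p) (C j$1$2) (C j$2$2) - psi (B j ** C j) 0 0 0 1))"
  have uvS: "uv (Suc j) = (psi (B j) (fst (uv j)) (snd (uv j)) (C j$1$1) (C j$2$1) - psi (B j ** C j) 0 0 1 0,
      psi (B j) (fst (uv j)) (snd (uv j)) (C j$1$2) (C j$2$2) - psi (B j ** C j) 0 0 0 1)" for j
    unfolding uv_def by simp
  define \<Gamma> where "\<Gamma> j = Gam (B j) (\<eta> j) (fst (uv j)) (snd (uv j))" for j
  have lat: "heis_lattice (\<Gamma> j)" for j unfolding \<Gamma>_def by (rule Gam_lattice[OF dB0 \<eta>0 zmB])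
  have zme: "zm (\<eta> j) (\<eta> (Suc j))" for j
  proof -
    obtain m :: int where m: "g j = of_int m * g (Suc j)" using g(3) by blast
    have "m \<noteq> 0" using m g(1)[of j] by auto
    then have "\<eta> (Suc j) = of_int m * \<eta> j" unfolding \<eta>_def m using g(1)[of j] g(1)[of "Suc j"] m by (simp add: field_simps)
    then show ?thesis unfolding zm_def by blast
  qed
  have nested: "\<Gamma> (Suc j) \<subseteq> \<Gamma> j" for j
    unfolding \<Gamma>_def C(2) uvS fst_conv snd_conv by (rule Gam_nested[OF C(1) zmB zme])
  have pG: "heis_p ` \<Gamma> j = latt (B j)" for j unfolding \<Gamma>_def by (rule Gam_p)
  have invB: "invertible (B j)" for j using dB0 by (simp add: invertible_det_nz)
  have iAi: "invertible Ai" unfolding Ai_def by (rule invertible_inv[OF iA])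
  have MAi: "(A ** matrix_inv (M k)) ** (M k ** Ai) = mat 1" for k
  proof -
    have "(A ** matrix_inv (M k)) ** (M k ** Ai) = A ** (matrix_inv (M k) ** M k) ** Ai"
      by (simp add: matrix_mul_assoc)
    also have "\<dots> = mat 1" unfolding Ai_def
      by (simp add: matrix_inv_props(2)[OF Mi(1)] matrix_mul_rid matrix_inv_props(1)[OF iA])
    finally show ?thesis .
  qed
  have invT: "matrix_inv (transpose (B j)) = A ** matrix_inv (M (kk j))" for j
    unfolding B_def transpose_transpose
    by (rule inv_unique[OF invertible_mult[OF Mi(1) iAi] MAi])
  have dual: "dual_lat (heis_p ` \<Gamma> j) = (\<lambda>v. A *v v) ` latt (matrix_inv (M (kk j)))" for j
    unfolding pG dual_lat_latt[OF invB] invT latt_mult ..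
  have unQ: "(\<Union>j. latt (matrix_inv (M (kk j)))) = Q"
  proof
    show "(\<Union>j. latt (matrix_inv (M (kk j)))) \<subseteq> Q" unfolding Qun by blast
    show "Q \<subseteq> (\<Union>j. latt (matrix_inv (M (kk j))))"
      unfolding Qun using mono[OF kkK(2)] by blast
  qed
  have SG: "S_Gamma \<Gamma> = S"
    unfolding S_Gamma_def dual SQ unQ[symmetric] image_UN ..
  have xl: "xi_lat (\<Gamma> j) = \<eta> j" for j
    unfolding \<Gamma>_def by (rule xi_lat_eq[OF \<eta>0 Gam_center[OF dB0]])
  have XG: "xi_Gamma \<Gamma> = \<xi>"
  proof -
    have "{of_int m / xi_lat (\<Gamma> j) | m. True} = {of_int m * g j | m. True}" for j
      unfolding xl \<eta>_def by simp
    then have "xi_Gamma \<Gamma> = (\<Union>j. {of_int m * g j | m. True})" unfolding xi_Gamma_def by simp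
    also have "\<dots> = \<xi>" using g(2) g(4) by blast
    finally show ?thesis .
  qed
  have D1: "(\<Inter>j. heis_p ` \<Gamma> j) = {0}" if cS: "closure S = UNIV"
  proof (intro equalityI subsetI)
    fix x assume x: "x \<in> (\<Inter>j. heis_p ` \<Gamma> j)"
    have xi: "x \<bullet> s \<in> \<int>" if s: "s \<in> S" for s
    proof -
      obtain j where "s \<in> dual_lat (heis_p ` \<Gamma> j)" using s SG unfolding S_Gamma_def by blast
      then obtain m where m: "m \<in> int_vecs" "s = (A ** matrix_inv (M (kk j))) *v m"
        unfolding dual latt_def by (auto simp: matrix_vector_mul_assoc)
      have "x \<in> latt (B j)" using x pG by blast
      then obtain n where n: "n \<in> int_vecs" "x = B j *v n" unfolding latt_def by auto
      have "x \<bullet> s = n \<bullet> (transpose (B j) *v s)" unfolding n(2) by (rule dot_transpose)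
      also have "transpose (B j) *v s = m"
        unfolding m(2) B_def transpose_transpose matrix_vector_mul_assoc
      proof -
        have "(M (kk j) ** Ai) ** (A ** matrix_inv (M (kk j))) = M (kk j) ** (Ai ** A) ** matrix_inv (M (kk j))"
          by (simp add: matrix_mul_assoc)
        also have "\<dots> = mat 1" unfolding Ai_def
          by (simp add: matrix_inv_props(2)[OF iA] matrix_mul_rid matrix_inv_props(1)[OF Mi(1)])
        finally show "(M (kk j) ** Ai ** (A ** matrix_inv (M (kk j)))) *v m = m" by simp
      qed
      finally show ?thesis using m(1) n(1) unfolding inner2 int_vecs2 by (auto intro!: Ints_add Ints_mult)
    qed
    have cl: "closed {s. x \<bullet> s \<in> \<int>}"
      using closed_vimage[OF closed_Ints, of "\<lambda>s. x \<bullet> s"] by (simp add: vimage_def continuous_intros)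
    have "closure S \<subseteq> {s. x \<bullet> s \<in> \<int>}" by (rule closure_minimal[OF _ cl]) (use xi in blast)
    then have all: "x \<bullet> s \<in> \<int>" for s using cS by blast
    show "x \<in> {0}"
    proof (rule ccontr)
      assume "x \<notin> {0}"
      then have "x \<bullet> x > 0" by simp
      then have "x \<bullet> ((1 / (2 * (x \<bullet> x))) *\<^sub>R x) = 1/2" by simp
      then show False using all half_not_int by metis
    qed
  next
    fix x assume "x \<in> {0::real^2}"
    then have "x = B j *v 0" for j by simp
    have z: "(0::real^2) \<in> int_vecs" unfolding int_vecs2 by simp
    show "x \<in> (\<Inter>j. heis_p ` \<Gamma> j)" unfolding pG latt_def
      using \<open>x \<in> {0}\<close> by (auto intro!: rev_image_eqI[OF z])
  qed
  have D2: "(\<Inter>j. \<Gamma> j) = {heis_one}" if cS: "closure S = UNIV" and cx: "closure \<xi> = UNIV"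
  proof (intro equalityI subsetI)
    fix h assume h: "h \<in> (\<Inter>j. \<Gamma> j)"
    obtain a b c where abc: "h = (a, b, c)" by (cases h)
    have "heis_p h \<in> (\<Inter>j. heis_p ` \<Gamma> j)" using h by blast
    then have "heis_p h = 0" using D1[OF cS] by blast
    then have ab: "a = 0" "b = 0" unfolding abc heis_p_simp vec2_eq by simp_all
    have hc: "h = heis_c c" unfolding abc ab heis_c_def ..
    have cg: "c * g j \<in> \<int>" for j
    proof -
      have "h \<in> \<Gamma> j \<inter> range heis_c" using h hc by blast
      then have "h \<in> {heis_c (of_int m * \<eta> j) | m. True}" unfolding \<Gamma>_def Gam_center[OF dB0] .
      then obtain m where "c = of_int m * \<eta> j" unfolding hc heis_c_def by auto
      then have "c * g j = of_int m" unfolding \<eta>_def using g(1)[of j] by simp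
      then show ?thesis by simp
    qed
    have cy: "c * y \<in> \<int>" if yx: "y \<in> \<xi>" for y
    proof -
      obtain j m where "y = of_int m * g j" using g(4)[OF yx] by blast
      then have "c * y = of_int m * (c * g j)" by simp
      moreover have "of_int m * (c * g j) \<in> \<int>" using cg[of j] by (rule Ints_mult[OF Ints_of_int])
      ultimately show ?thesis by metis
    qed
    have cl: "closed {y. c * y \<in> \<int>}"
      using closed_vimage[OF closed_Ints, of "\<lambda>y. c * y"] by (simp add: vimage_def continuous_intros)
    have "closure \<xi> \<subseteq> {y. c * y \<in> \<int>}" by (rule closure_minimal[OF _ cl]) (use cy in blast)
    then have all: "c * y \<in> \<int>" for y using cx by blast
    have "c = 0"
    proof (rule ccontr)
      assume "c \<noteq> 0"
      then have "c * (1 / (2 * c)) = 1/2" by simp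
      then show False using all half_not_int by metis
    qed
    then show "h \<in> {heis_one}" unfolding abc ab heis_one_def by simp
  next
    fix h assume "h \<in> {heis_one}"
    then show "h \<in> (\<Inter>j. \<Gamma> j)" using lat unfolding heis_lattice_def heis_subgroup_def by auto
  qed
  show ?thesis
    by (intro exI[of _ \<Gamma>] conjI allI impI lat nested SG XG D1 D2) auto
qed

end
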